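(* Let $n\geq 5$ and let $(\mu_0^n,\cdot,[-,-])$ be a transposed Poisson algebra structure on the associative algebra $\mu_0^n$. Then it is isomorphic to one of the following pairwise non-isomorphic algebras: $\mathbf{TP}(1,0,\dots,0)$; $\mathbf{TP}(0,\alpha,0,\dots,0)$ with $\alpha\in\mathbb{C}$; and, for $4\leq s\leq n$, the algebra $\mathbf{TP}(\alpha_2,\dots,\alpha_n)$ with $\alpha_s=1$, $\alpha_{2s-3}=\alpha\in\mathbb{C}$ (this entry being present only when $2s-3\leq n$), and all other $\alpha_i=0$.
   Context: $\mu_0^n$ is the complex commutative associative algebra with basis $\{e_1,\dots,e_n\}$ and $e_i\cdot e_j=e_{i+j}$ for $2\leq i+j\leq n$, other products zero. A transposed Poisson algebra is a triple $(\mathfrak{L},\cdot,[-,-])$ with $(\mathfrak{L},\cdot)$ commutative associative, $(\mathfrak{L},[-,-])$ a Lie algebra, and $2z\cdot[x,y]=[z\cdot x,y]+[x,z\cdot y]$ for all $x,y,z$. For $\alpha_2,\dots,\alpha_n\in\mathbb{C}$, $\mathbf{TP}(\alpha_2,\dots,\alpha_n)$ denotes $\mu_0^n$ with its associative product together with the bracket $[e_i,e_j]=(j-i)\sum_{t=i+j-1}^{n}\alpha_{t-i-j+3}e_t$ for $3\leq i+j\leq n+1$, all other brackets of basis elements zero. An isomorphism of transposed Poisson algebras is a linear bijection preserving both operations. *)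

theory Defs
  imports Complex_Main "HOL-Library.Function_Algebras"
begin

text \<open>Vectors of the n-dimensional space with basis e_1..e_n are functions
  nat => complex supported in {1..n}; the coordinate k is the e_k-coefficient.\<close>

definition vec_carrier :: "nat \<Rightarrow> (nat \<Rightarrow> complex) set" where
  "vec_carrier n = {v. \<forall>k. k \<notin> {1..n} \<longrightarrow> v k = 0}"

definition scal :: "complex \<Rightarrow> (nat \<Rightarrow> complex) \<Rightarrow> (nat \<Rightarrow> complex)" where
  "scal a v = (\<lambda>k. a * v k)"

text \<open>The associative product of mu_0^n: e_i e_j = e_(i+j) if i+j <= n, else 0.\<close>
definition mu0 :: "nat \<Rightarrow> (nat \<Rightarrow> complex) \<Rightarrow> (nat \<Rightarrow> complex) \<Rightarrow> (nat \<Rightarrow> complex)" where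
  "mu0 n x y = (\<lambda>k. if 2 \<le> k \<and> k \<le> n then (\<Sum>i=1..k-1. x i * y (k - i)) else 0)"

definition linear_on :: "nat \<Rightarrow> ((nat \<Rightarrow> complex) \<Rightarrow> (nat \<Rightarrow> complex)) \<Rightarrow> bool" where
  "linear_on n f \<longleftrightarrow>
     (\<forall>x\<in>vec_carrier n. f x \<in> vec_carrier n) \<and>
     (\<forall>a x y. x \<in> vec_carrier n \<longrightarrow> y \<in> vec_carrier n \<longrightarrow>
        f (scal a x + y) = scal a (f x) + f y)"

definition bilinear_on :: "nat \<Rightarrow> ((nat \<Rightarrow> complex) \<Rightarrow> (nat \<Rightarrow> complex) \<Rightarrow> (nat \<Rightarrow> complex)) \<Rightarrow> bool" where
  "bilinear_on n b \<longleftrightarrow>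
     (\<forall>x\<in>vec_carrier n. \<forall>y\<in>vec_carrier n. b x y \<in> vec_carrier n) \<and>
     (\<forall>a x y z. x \<in> vec_carrier n \<longrightarrow> y \<in> vec_carrier n \<longrightarrow> z \<in> vec_carrier n \<longrightarrow>
        b (scal a x + y) z = scal a (b x z) + b y z \<and>
        b z (scal a x + y) = scal a (b z x) + b z y)"

definition is_TP :: "nat \<Rightarrow> ((nat \<Rightarrow> complex) \<Rightarrow> (nat \<Rightarrow> complex) \<Rightarrow> (nat \<Rightarrow> complex))
    \<Rightarrow> ((nat \<Rightarrow> complex) \<Rightarrow> (nat \<Rightarrow> complex) \<Rightarrow> (nat \<Rightarrow> complex)) \<Rightarrow> bool" where
  "is_TP n m br \<longleftrightarrow>
     bilinear_on n m \<and> bilinear_on n br \<and>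
     (\<forall>x\<in>vec_carrier n. \<forall>y\<in>vec_carrier n. m x y = m y x) \<and>
     (\<forall>x\<in>vec_carrier n. \<forall>y\<in>vec_carrier n. \<forall>z\<in>vec_carrier n. m (m x y) z = m x (m y z)) \<and>
     (\<forall>x\<in>vec_carrier n. br x x = 0) \<and>
     (\<forall>x\<in>vec_carrier n. \<forall>y\<in>vec_carrier n. \<forall>z\<in>vec_carrier n.
        br x (br y z) + br y (br z x) + br z (br x y) = 0) \<and>
     (\<forall>x\<in>vec_carrier n. \<forall>y\<in>vec_carrier n. \<forall>z\<in>vec_carrier n.
        scal 2 (m z (br x y)) = br (m z x) y + br x (m z y))"

definition TP_iso :: "nat
    \<Rightarrow> ((nat \<Rightarrow> complex) \<Rightarrow> (nat \<Rightarrow> complex) \<Rightarrow> (nat \<Rightarrow> complex))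
    \<Rightarrow> ((nat \<Rightarrow> complex) \<Rightarrow> (nat \<Rightarrow> complex) \<Rightarrow> (nat \<Rightarrow> complex))
    \<Rightarrow> ((nat \<Rightarrow> complex) \<Rightarrow> (nat \<Rightarrow> complex) \<Rightarrow> (nat \<Rightarrow> complex))
    \<Rightarrow> ((nat \<Rightarrow> complex) \<Rightarrow> (nat \<Rightarrow> complex) \<Rightarrow> (nat \<Rightarrow> complex)) \<Rightarrow> bool" where
  "TP_iso n m1 b1 m2 b2 \<longleftrightarrow>
     (\<exists>\<phi>. linear_on n \<phi> \<and> bij_betw \<phi> (vec_carrier n) (vec_carrier n) \<and>
        (\<forall>x\<in>vec_carrier n. \<forall>y\<in>vec_carrier n.
           \<phi> (m1 x y) = m2 (\<phi> x) (\<phi> y) \<and> \<phi> (b1 x y) = b2 (\<phi> x) (\<phi> y)))"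

text \<open>Bracket of TP(alpha_2,...,alpha_n) on basis elements:
  [e_i,e_j] = (j-i) * sum_{t=i+j-1}^n alpha_(t-i-j+3) e_t for 3 <= i+j <= n+1.
  Only alpha 2, ..., alpha n are used.\<close>
definition tp_basis :: "nat \<Rightarrow> (nat \<Rightarrow> complex) \<Rightarrow> nat \<Rightarrow> nat \<Rightarrow> nat \<Rightarrow> complex" where
  "tp_basis n \<alpha> i j t =
     (if 3 \<le> i + j \<and> i + j \<le> n + 1 \<and> i + j - 1 \<le> t \<and> t \<le> n
      then of_int (int j - int i) * \<alpha> (t + 3 - (i + j)) else 0)"

definition tp_bracket :: "nat \<Rightarrow> (nat \<Rightarrow> complex) \<Rightarrow> (nat \<Rightarrow> complex) \<Rightarrow> (nat \<Rightarrow> complex) \<Rightarrow> (nat \<Rightarrow> complex)" where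
  "tp_bracket n \<alpha> x y = (\<lambda>t. \<Sum>i=1..n. \<Sum>j=1..n. x i * y j * tp_basis n \<alpha> i j t)"

definition TP_params :: "nat \<Rightarrow> (nat \<Rightarrow> complex) set" where
  "TP_params n =
     {(\<lambda>k. if k = 2 then 1 else 0)}
     \<union> {(\<lambda>k. if k = 3 then a else 0) | a. True}
     \<union> {(\<lambda>k. if k = s then 1 else if k = 2 * s - 3 \<and> 2 * s - 3 \<le> n then a else 0) | s a.
          4 \<le> s \<and> s \<le> n}"

end

theory Submission
  imports Defs "HOL-Computational_Algebra.Formal_Power_Series"
begin
unbundle fps_syntax

definition eqm :: "nat \<Rightarrow> 'a::zero fps \<Rightarrow> 'a fps \<Rightarrow> bool" where
  "eqm N f g \<longleftrightarrow> (\<forall>i<N. f $ i = g $ i)"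

lemma eqm_refl[simp]: "eqm N f f" by (simp add: eqm_def)
lemma eqm_sym: "eqm N f g \<Longrightarrow> eqm N g f" by (simp add: eqm_def)
lemma eqm_trans: "eqm N f g \<Longrightarrow> eqm N g h \<Longrightarrow> eqm N f h" by (simp add: eqm_def)
lemma eqm_mono: "eqm N f g \<Longrightarrow> M \<le> N \<Longrightarrow> eqm M f g" by (simp add: eqm_def)

lemma eqm_add: "eqm N f g \<Longrightarrow> eqm N f' g' \<Longrightarrow> eqm N (f + f') (g + g')"
  by (simp add: eqm_def)
lemma eqm_diff: "eqm N f g \<Longrightarrow> eqm N f' g' \<Longrightarrow> eqm N (f - f') (g - (g'::'a::ab_group_add fps))"
  by (simp add: eqm_def)

lemma eqm_mult_right: "eqm N f (g::'a::comm_ring_1 fps) \<Longrightarrow> eqm N (f * h) (g * h)"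
  unfolding eqm_def fps_mult_nth by (auto intro!: sum.cong)

lemma eqm_mult_left: "eqm N f (g::'a::comm_ring_1 fps) \<Longrightarrow> eqm N (h * f) (h * g)"
  using eqm_mult_right[of N f g h] by (simp add: mult.commute)

lemma eqm_mult: "eqm N f (g::'a::comm_ring_1 fps) \<Longrightarrow> eqm N f' g' \<Longrightarrow> eqm N (f * f') (g * g')"
  by (meson eqm_mult_left eqm_mult_right eqm_trans)

lemma eqm_power: "eqm N f (g::'a::comm_ring_1 fps) \<Longrightarrow> eqm N (f ^ k) (g ^ k)"
  by (induction k) (auto intro: eqm_mult)

lemma eqm_compose_left: "eqm N f (g::'a::comm_ring_1 fps) \<Longrightarrow> eqm N (f oo v) (g oo v)"
  unfolding eqm_def fps_compose_nth by (auto intro!: sum.cong)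

lemma eqm_compose_right: "eqm N u (v::'a::comm_ring_1 fps) \<Longrightarrow> eqm N (f oo u) (f oo v)"
proof -
  assume a: "eqm N u v"
  have "eqm N (u ^ l) (v ^ l)" for l using eqm_power[OF a] .
  then show ?thesis unfolding eqm_def fps_compose_nth by (auto intro!: sum.cong)
qed

lemma eqm_deriv: "eqm (Suc N) f (g::'a::comm_ring_1 fps) \<Longrightarrow> eqm N (fps_deriv f) (fps_deriv g)"
  unfolding eqm_def by auto

lemma eqm_mult_low:
  fixes h f g :: "'a::comm_ring_1 fps"
  assumes h: "\<And>k. k < d \<Longrightarrow> h $ k = 0" and e: "eqm N f g"
  shows "eqm (N + d) (h * f) (h * g)"
  unfolding eqm_def fps_mult_nth
proof (intro allI impI sum.cong refl)
  fix i k assume i: "i < N + d" and k: "k \<in> {0..i}"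
  show "h $ k * f $ (i - k) = h $ k * g $ (i - k)"
  proof (cases "k < d")
    case True then show ?thesis using h by simp
  next
    case False then have "i - k < N" using i k by auto
    then show ?thesis using e by (simp add: eqm_def)
  qed
qed

lemma eqm_cancel_Xpow:
  fixes f g :: "'a::comm_ring_1 fps"
  assumes "eqm (N + d) (fps_X ^ d * f) (fps_X ^ d * g)"
  shows "eqm N f g"
  unfolding eqm_def
proof (intro allI impI)
  fix i assume "i < N"
  then have "(fps_X ^ d * f) $ (i + d) = (fps_X ^ d * g) $ (i + d)"
    using assms by (simp add: eqm_def)
  then show "f $ i = g $ i" by (simp add: fps_X_power_mult_nth)
qed

lemma eqm_cancel_unit:
  fixes f g w :: "'a::field fps"
  assumes "eqm N (w * f) (w * g)" "w $ 0 \<noteq> 0"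
  shows "eqm N f g"
proof -
  have "eqm N (inverse w * (w * f)) (inverse w * (w * g))"
    using eqm_mult_left[OF assms(1)] .
  then show ?thesis using assms(2)
    by (simp add: mult.assoc[symmetric] inverse_mult_eq_1)
qed


definition Fv :: "(nat \<Rightarrow> complex) \<Rightarrow> complex fps" where
  "Fv x = Abs_fps x"
definition vecof :: "nat \<Rightarrow> complex fps \<Rightarrow> nat \<Rightarrow> complex" where
  "vecof n f = (\<lambda>k. if 1 \<le> k \<and> k \<le> n then f $ k else 0)"
definition ee :: "nat \<Rightarrow> nat \<Rightarrow> nat \<Rightarrow> complex" where
  "ee n i = (\<lambda>t. if t = i \<and> 1 \<le> i \<and> i \<le> n then 1 else 0)"
definition Vf :: "(nat \<Rightarrow> complex) \<Rightarrow> complex fps" where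
  "Vf a = Abs_fps (\<lambda>i. a (i + 2))"

lemma Fv_nth[simp]: "Fv x $ k = x k" by (simp add: Fv_def)
lemma Vf_nth[simp]: "Vf a $ k = a (k + 2)" by (simp add: Vf_def)

lemma carrier_iff: "x \<in> vec_carrier n \<longleftrightarrow> x 0 = 0 \<and> (\<forall>k>n. x k = 0)"
proof -
  have "\<And>k. k \<notin> {1..n} \<longleftrightarrow> k = 0 \<or> n < k" by auto
  then show ?thesis unfolding vec_carrier_def by auto
qed

lemma carrier_0: "x \<in> vec_carrier n \<Longrightarrow> x 0 = 0" by (simp add: carrier_iff)
lemma carrier_gt: "x \<in> vec_carrier n \<Longrightarrow> n < k \<Longrightarrow> x k = 0" by (simp add: carrier_iff)

lemma vecof_carrier[simp]: "vecof n f \<in> vec_carrier n"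
  by (simp add: vec_carrier_def vecof_def)

lemma ee_carrier[simp]: "ee n i \<in> vec_carrier n"
  by (simp add: vec_carrier_def ee_def)

lemma vecof_Fv: "x \<in> vec_carrier n \<Longrightarrow> vecof n (Fv x) = x"
  by (auto simp: vecof_def fun_eq_iff carrier_iff Suc_le_eq)

lemma Fv_vecof: "f $ 0 = 0 \<Longrightarrow> eqm (Suc n) (Fv (vecof n f)) f"
  by (auto simp: eqm_def vecof_def Suc_le_eq)

lemma vecof_eqm: "eqm (Suc n) f g \<Longrightarrow> vecof n f = vecof n g"
  by (auto simp: eqm_def vecof_def fun_eq_iff)

lemma Fv_0: "x \<in> vec_carrier n \<Longrightarrow> Fv x $ 0 = 0" by (simp add: carrier_0)

lemma mu0_fps:
  assumes x: "x \<in> vec_carrier n" and y: "y \<in> vec_carrier n"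
  shows "mu0 n x y = vecof n (Fv x * Fv y)"
proof (rule ext)
  fix k
  show "mu0 n x y k = vecof n (Fv x * Fv y) k"
  proof (cases "2 \<le> k \<and> k \<le> n")
    case True
    have "(Fv x * Fv y) $ k = (\<Sum>i=0..k. x i * y (k - i))" by (simp add: fps_mult_nth)
    also have "\<dots> = (\<Sum>i=1..k-1. x i * y (k - i))"
    proof -
      have "{0..k} = insert 0 (insert k {1..k-1})" using True by auto
      moreover have "k \<notin> {1..k-1}" "0 \<notin> insert k {1..k-1}" using True by auto
      ultimately show ?thesis using True carrier_0[OF x] carrier_0[OF y] by simp
    qed
    finally show ?thesis using True by (simp add: mu0_def vecof_def)
  next
    case False
    then have "k \<le> 1 \<or> n < k" by auto
    then show ?thesis
    proof
      assume "k \<le> 1"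
      then have "k = 0 \<or> k = 1" by auto
      then show ?thesis using carrier_0[OF x] carrier_0[OF y]
        by (auto simp: mu0_def vecof_def fps_mult_nth_1)
    qed (auto simp: mu0_def vecof_def)
  qed
qed

lemma Fv_expand:
  assumes x: "x \<in> vec_carrier n"
  shows "Fv x = (\<Sum>i=1..n. fps_const (x i) * fps_X ^ i)"
proof (rule fps_ext)
  fix k
  have "(\<Sum>i=1..n. fps_const (x i) * fps_X ^ i) $ k = (\<Sum>i=1..n. if i = k then x i else 0)"
    unfolding fps_sum_nth by (rule sum.cong) (auto simp: fps_X_power_nth)
  also have "\<dots> = (if k \<in> {1..n} then x k else 0)"
    by (simp add: sum.delta')
  also have "\<dots> = x k" using carrier_0[OF x] carrier_gt[OF x]
    by (auto simp: not_le Suc_le_eq)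
  finally show "Fv x $ k = (\<Sum>i=1..n. fps_const (x i) * fps_X ^ i) $ k" by simp
qed

definition Pb :: "complex fps \<Rightarrow> complex fps \<Rightarrow> complex fps" where
  "Pb f g = f * fps_deriv g - fps_deriv f * g"

lemma Pb_sum:
  "Pb (\<Sum>i\<in>I. fps_const (c i) * fps_X ^ i) (\<Sum>j\<in>J. fps_const (d j) * fps_X ^ j)
   = (\<Sum>i\<in>I. \<Sum>j\<in>J. fps_const (c i * d j) * Pb (fps_X ^ i) (fps_X ^ j))"
proof -
  have "Pb (\<Sum>i\<in>I. fps_const (c i) * fps_X ^ i) (\<Sum>j\<in>J. fps_const (d j) * fps_X ^ j)
    = (\<Sum>i\<in>I. \<Sum>j\<in>J. (fps_const (c i) * fps_X ^ i) * (fps_const (d j) * fps_deriv (fps_X ^ j)))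
    - (\<Sum>i\<in>I. \<Sum>j\<in>J. (fps_const (c i) * fps_deriv (fps_X ^ i)) * (fps_const (d j) * fps_X ^ j))"
    unfolding Pb_def by (simp add: fps_deriv_sum sum_product)
  also have "\<dots> = (\<Sum>i\<in>I. \<Sum>j\<in>J. fps_const (c i * d j) * Pb (fps_X ^ i) (fps_X ^ j))"
    unfolding sum_subtractf[symmetric] Pb_def
    by (rule sum.cong[OF refl], rule sum.cong[OF refl]) (simp add: algebra_simps fps_const_mult[symmetric] del: fps_const_mult)
  finally show ?thesis .
qed

lemma Pb_X:
  assumes "1 \<le> i" "1 \<le> j"
  shows "Pb (fps_X ^ i) (fps_X ^ j) = fps_const (of_int (int j - int i)) * fps_X ^ (i + j - 1)"
proof -
  have "fps_X ^ i * fps_X ^ (j - 1) = (fps_X::complex fps) ^ (i + j - 1)"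
    using assms by (simp add: power_add[symmetric])
  moreover have "fps_X ^ (i - 1) * fps_X ^ j = (fps_X::complex fps) ^ (i + j - 1)"
    using assms by (simp add: power_add[symmetric])
  ultimately have "Pb (fps_X ^ i) (fps_X ^ j) = fps_const (of_nat j) * fps_X ^ (i + j - 1) - fps_const (of_nat i) * fps_X ^ (i + j - 1)"
    unfolding Pb_def fps_deriv_power by (simp add: algebra_simps)
  also have "\<dots> = fps_const (of_nat j - of_nat i) * fps_X ^ (i + j - 1)"
    by (simp add: algebra_simps fps_const_sub[symmetric] del: fps_const_sub)
  finally show ?thesis by simp
qed


lemma tp_basis_alt:
  assumes "1 \<le> i" "1 \<le> j" "1 \<le> t" "t \<le> n"
  shows "tp_basis n a i j t = of_int (int j - int i) * (if t < i + j - 1 then 0 else a (t - (i + j - 1) + 2))"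
proof (cases "i + j = 2")
  case True
  then have "i = 1" "j = 1" using assms by auto
  then show ?thesis by (simp add: tp_basis_def)
next
  case False
  then have "t + 3 - (i + j) = t - (i + j - 1) + 2" if "\<not> t < i + j - 1" using that assms by auto
  then show ?thesis using False assms by (auto simp: tp_basis_def)
qed

lemma tp_basis_out:
  assumes "t = 0 \<or> n < t"
  shows "tp_basis n a i j t = 0"
  using assms by (auto simp: tp_basis_def)

lemma tpb_fps:
  assumes x: "x \<in> vec_carrier n" and y: "y \<in> vec_carrier n"
  shows "tp_bracket n a x y = vecof n (Vf a * Pb (Fv x) (Fv y))"
proof (rule ext)
  fix t
  have P: "Pb (Fv x) (Fv y) = (\<Sum>i=1..n. \<Sum>j=1..n. fps_const (x i * y j) * Pb (fps_X ^ i) (fps_X ^ j))"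
    unfolding Fv_expand[OF x] Fv_expand[OF y] by (rule Pb_sum)
  have "(Vf a * Pb (Fv x) (Fv y)) $ t = (\<Sum>i=1..n. \<Sum>j=1..n. x i * y j *
      (of_int (int j - int i) * (if t < i + j - 1 then 0 else a (t - (i + j - 1) + 2))))"
    unfolding P sum_distrib_left fps_sum_nth
  proof (rule sum.cong[OF refl], rule sum.cong[OF refl])
    fix i j assume "i \<in> {1..n}" "j \<in> {1..n}"
    then have e1: "Vf a * (fps_const (x i * y j) * Pb (fps_X ^ i) (fps_X ^ j))
       = fps_const (x i * y j * of_int (int j - int i)) * (fps_X ^ (i + j - 1) * Vf a)"
      by (simp add: Pb_X algebra_simps)
    have e2: "(fps_const (x i * y j * of_int (int j - int i)) * (fps_X ^ (i + j - 1) * Vf a)) $ t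
       = x i * y j * (of_int (int j - int i) * (if t < i + j - 1 then 0 else a (t - (i + j - 1) + 2)))"
      unfolding fps_mult_left_const_nth fps_X_power_mult_nth Vf_nth by simp
    show "(Vf a * (fps_const (x i * y j) * Pb (fps_X ^ i) (fps_X ^ j))) $ t =
       x i * y j * (of_int (int j - int i) * (if t < i + j - 1 then 0 else a (t - (i + j - 1) + 2)))"
      unfolding e1 by (rule e2)
  qed
  then show "tp_bracket n a x y t = vecof n (Vf a * Pb (Fv x) (Fv y)) t"
    by (auto simp: vecof_def tp_bracket_def tp_basis_alt tp_basis_out intro!: sum.cong)
qed


lemma sum_fun: "(\<Sum>i\<in>S. g i) t = (\<Sum>i\<in>S. (g i :: nat \<Rightarrow> complex) t)"
  by (induction S rule: infinite_finite_induct) auto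

lemma scal_apply: "scal a v t = a * v t" by (simp add: scal_def)

lemma carrier_zero[simp]: "0 \<in> vec_carrier n" by (simp add: vec_carrier_def)
lemma carrier_add[simp]: "x \<in> vec_carrier n \<Longrightarrow> y \<in> vec_carrier n \<Longrightarrow> x + y \<in> vec_carrier n"
  by (simp add: vec_carrier_def)
lemma carrier_scal[simp]: "x \<in> vec_carrier n \<Longrightarrow> scal a x \<in> vec_carrier n"
  by (simp add: vec_carrier_def scal_def)
lemma carrier_sum: "(\<And>i. i \<in> S \<Longrightarrow> g i \<in> vec_carrier n) \<Longrightarrow> (\<Sum>i\<in>S. g i) \<in> vec_carrier n"
  by (induction S rule: infinite_finite_induct) auto

lemma scal_0[simp]: "scal a 0 = 0" by (simp add: scal_def fun_eq_iff)
lemma scal_1[simp]: "scal 1 x = x" by (simp add: scal_def fun_eq_iff)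

lemma lin_0: assumes "linear_on n f" shows "f 0 = 0"
proof -
  have "f (scal 1 0 + 0) = scal 1 (f 0) + f 0" using assms carrier_zero unfolding linear_on_def by blast
  then show ?thesis by simp
qed

lemma lin_add: "linear_on n f \<Longrightarrow> x \<in> vec_carrier n \<Longrightarrow> y \<in> vec_carrier n \<Longrightarrow> f (x + y) = f x + f y"
  unfolding linear_on_def by (metis scal_1)

lemma lin_scal: "linear_on n f \<Longrightarrow> x \<in> vec_carrier n \<Longrightarrow> f (scal a x) = scal a (f x)"
  using lin_0[of n f] unfolding linear_on_def by (metis add.right_neutral carrier_zero)

lemma lin_carrier: "linear_on n f \<Longrightarrow> x \<in> vec_carrier n \<Longrightarrow> f x \<in> vec_carrier n"
  unfolding linear_on_def by blast

lemma lin_sum: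
  assumes f: "linear_on n f" and v: "\<And>i. i \<in> S \<Longrightarrow> v i \<in> vec_carrier n"
  shows "f (\<Sum>i\<in>S. scal (c i) (v i)) = (\<Sum>i\<in>S. scal (c i) (f (v i)))"
  using v
proof (induction S rule: infinite_finite_induct)
  case (infinite A) then show ?case using lin_0[OF f] by (metis sum.infinite)
next
  case empty then show ?case using lin_0[OF f] by (simp only: sum.empty)
next
  case (insert i F)
  have "f (\<Sum>i\<in>insert i F. scal (c i) (v i)) = f (scal (c i) (v i) + (\<Sum>i\<in>F. scal (c i) (v i)))"
    using insert.hyps by (subst sum.insert) auto
  also have "\<dots> = scal (c i) (f (v i)) + f (\<Sum>i\<in>F. scal (c i) (v i))"
    using insert.prems f carrier_sum[of F "\<lambda>i. scal (c i) (v i)" n] unfolding linear_on_def by simp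
  also have "\<dots> = scal (c i) (f (v i)) + (\<Sum>i\<in>F. scal (c i) (f (v i)))"
    using insert.IH insert.prems by simp
  finally show ?case using insert.hyps by (subst sum.insert) auto
qed

lemma expand_vec:
  assumes x: "x \<in> vec_carrier n"
  shows "x = (\<Sum>i=1..n. scal (x i) (ee n i))"
proof (rule ext)
  fix t
  have "(\<Sum>i=1..n. scal (x i) (ee n i)) t = (\<Sum>i=1..n. if i = t then x i else 0)"
    unfolding sum_fun by (rule sum.cong) (auto simp: ee_def scal_apply)
  also have "\<dots> = (if t \<in> {1..n} then x t else 0)" by (simp add: sum.delta')
  also have "\<dots> = x t" using carrier_0[OF x] carrier_gt[OF x] by (auto simp: not_le Suc_le_eq)
  finally show "x t = (\<Sum>i=1..n. scal (x i) (ee n i)) t" by simp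
qed

lemma lin_expand:
  assumes f: "linear_on n f" and x: "x \<in> vec_carrier n"
  shows "f x = (\<Sum>i=1..n. scal (x i) (f (ee n i)))"
  using lin_sum[OF f, of "{1..n}" "ee n" x] expand_vec[OF x] by simp

lemma bilin_left: "bilinear_on n b \<Longrightarrow> z \<in> vec_carrier n \<Longrightarrow> linear_on n (\<lambda>x. b x z)"
  unfolding bilinear_on_def linear_on_def by blast

lemma bilin_right: "bilinear_on n b \<Longrightarrow> z \<in> vec_carrier n \<Longrightarrow> linear_on n (b z)"
  unfolding bilinear_on_def linear_on_def by blast

lemma bilin_expand:
  assumes b: "bilinear_on n b" and x: "x \<in> vec_carrier n" and y: "y \<in> vec_carrier n"
  shows "b x y t = (\<Sum>i=1..n. \<Sum>j=1..n. x i * y j * b (ee n i) (ee n j) t)"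
proof -
  have "b x y = (\<Sum>i=1..n. scal (x i) (b (ee n i) y))"
    using lin_expand[OF bilin_left[OF b y] x] .
  also have "\<dots> = (\<Sum>i=1..n. scal (x i) (\<Sum>j=1..n. scal (y j) (b (ee n i) (ee n j))))"
    using lin_expand[OF bilin_right[OF b ee_carrier] y] by simp
  finally show ?thesis
    by (simp add: sum_fun sum_distrib_left mult.assoc scal_apply)
qed

lemma bilin_zero_left: "bilinear_on n b \<Longrightarrow> y \<in> vec_carrier n \<Longrightarrow> b 0 y = 0"
  using lin_0[OF bilin_left] by blast

lemma bilin_antisym:
  assumes b: "bilinear_on n b" and alt: "\<forall>x\<in>vec_carrier n. b x x = 0"
    and x: "x \<in> vec_carrier n" and y: "y \<in> vec_carrier n"
  shows "b x y = - b y x"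
proof -
  have "b (x + y) (x + y) = b x (x + y) + b y (x + y)"
    using lin_add[OF bilin_left[OF b] x y] x y by simp
  also have "\<dots> = b x x + b x y + (b y x + b y y)"
    using lin_add[OF bilin_right[OF b x] x y] lin_add[OF bilin_right[OF b y] x y] by simp
  finally have "0 = b x y + b y x" using alt x y by simp
  then show ?thesis by (simp add: eq_neg_iff_add_eq_0)
qed


lemma ee_zero: "n < i \<Longrightarrow> ee n i = 0"
  by (simp add: ee_def fun_eq_iff)

lemma mu0_ee_left:
  assumes "1 \<le> k"
  shows "mu0 n (ee n k) v t = (if k < t \<and> t \<le> n then v (t - k) else 0)"
proof (cases "2 \<le> t \<and> t \<le> n")
  case True
  have "(\<Sum>l=1..t-1. ee n k l * v (t - l)) = (\<Sum>l=1..t-1. if l = k then (if k \<le> n then v (t - k) else 0) else 0)"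
    by (rule sum.cong) (auto simp: ee_def assms)
  also have "\<dots> = (if k \<in> {1..t-1} then (if k \<le> n then v (t - k) else 0) else 0)"
    by (simp add: sum.delta')
  finally show ?thesis using True assms by (auto simp: mu0_def)
next
  case False
  then show ?thesis using assms by (auto simp: mu0_def)
qed

lemma mu0_ee_ee:
  assumes "1 \<le> k" "1 \<le> i"
  shows "mu0 n (ee n k) (ee n i) = ee n (k + i)"
proof (rule ext)
  fix t show "mu0 n (ee n k) (ee n i) t = ee n (k + i) t"
    unfolding mu0_ee_left[OF assms(1)] using assms by (auto simp: ee_def)
qed

lemma bilin_zero_right: "bilinear_on n b \<Longrightarrow> y \<in> vec_carrier n \<Longrightarrow> b y 0 = 0"
  using lin_0[OF bilin_right] by blast

definition Fb :: "nat \<Rightarrow> (nat \<Rightarrow> complex) \<Rightarrow> nat \<Rightarrow> nat \<Rightarrow> nat \<Rightarrow> complex" where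
  "Fb n a i j t = of_int (int j - int i) * (if i + j \<le> t + 2 \<and> t \<le> n then a (t + 3 - (i + j)) else 0)"

lemma Fb_antisym: "Fb n a i j t = - Fb n a j i t"
  by (simp add: Fb_def add.commute algebra_simps)

lemma Fb_ident:
  assumes "1 \<le> i" "1 \<le> j" "1 \<le> k"
  shows "(if k < t \<and> t \<le> n then 2 * Fb n a i j (t - k) else 0) = Fb n a (i + k) j t + Fb n a i (j + k) t"
proof -
  have c: "(of_int (int j - int (i + k)) + of_int (int (j + k) - int i) :: complex) = 2 * of_int (int j - int i)"
    by simp
  have R: "Fb n a (i + k) j t + Fb n a i (j + k) t = 2 * of_int (int j - int i) *
      (if i + j + k \<le> t + 2 \<and> t \<le> n then a (t + 3 - (i + j + k)) else 0)"
    unfolding Fb_def c[symmetric] by (simp add: algebra_simps add.assoc add.left_commute)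
  show ?thesis
  proof (cases "k < t \<and> t \<le> n")
    case True
    then have "i + j \<le> t - k + 2 \<longleftrightarrow> i + j + k \<le> t + 2" "t - k + 3 - (i + j) = t + 3 - (i + j + k)" "t - k \<le> n" by auto
    then show ?thesis using True R by (simp add: Fb_def)
  next
    case False
    show ?thesis
    proof (cases "i + j + k \<le> t + 2 \<and> t \<le> n")
      case True
      then have "i = 1" "j = 1" using False assms by auto
      then show ?thesis using R by (simp add: Fb_def)
    next
      case False2: False
      then show ?thesis using R False by auto
    qed
  qed
qed

lemma hom_zero:
  fixes D :: "nat \<Rightarrow> nat \<Rightarrow> nat \<Rightarrow> complex"
  assumes anti: "\<And>i j t. D i j t = - D j i t"
    and base: "\<And>t. D 1 2 t = 0"
    and ident: "\<And>i j k t. 1 \<le> i \<Longrightarrow> 1 \<le> j \<Longrightarrow> 1 \<le> k \<Longrightarrow> k \<le> 2 \<Longrightarrow> i + j + k \<le> M \<Longrightarrow>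
        (\<forall>t. D i j t = 0) \<Longrightarrow> D (i + k) j t + D i (j + k) t = 0"
  shows "1 \<le> i \<Longrightarrow> 1 \<le> j \<Longrightarrow> i + j \<le> M \<Longrightarrow> D i j t = 0"
proof (induction "i + j" arbitrary: i j t rule: less_induct)
  case less
  define s where "s = i + j"
  show ?case
  proof (cases "s \<le> 3")
    case True
    then have "(i = 1 \<and> j = 1) \<or> (i = 1 \<and> j = 2) \<or> (i = 2 \<and> j = 1)"
      using less.prems s_def by auto
    moreover have "D 1 1 t = 0" using anti[of 1 1 t] by simp
    moreover have "D 2 1 t = 0" using anti[of 2 1 t] base[of t] by simp
    ultimately show ?thesis using base by auto
  next
    case False
    define c where "c p t = D p (s - p) t" for p t
    have IH: "\<And>p q t. 1 \<le> p \<Longrightarrow> 1 \<le> q \<Longrightarrow> p + q < s \<Longrightarrow> D p q t = 0"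
      using less.hyps less.prems s_def by auto
    have step1: "c (p + 1) t + c p t = 0" if "1 \<le> p" "p \<le> s - 2" for p t
    proof -
      have "D (p + 1) (s - 1 - p) t + D p (s - 1 - p + 1) t = 0"
        using ident[of p "s - 1 - p" 1 t] IH[of p "s - 1 - p"] that False less.prems s_def by auto
      moreover have "s - 1 - p + 1 = s - p" "s - 1 - p = s - (p + 1)" using that False by auto
      ultimately show ?thesis unfolding c_def by simp
    qed
    have step2: "c 3 t + c 1 t = 0" for t
    proof -
      have "D (1 + 2) (s - 3) t + D 1 (s - 3 + 2) t = 0"
        using ident[of 1 "s - 3" 2 t] IH[of 1 "s - 3"] False less.prems s_def by auto
      moreover have "s - 3 + 2 = s - 1" using False by auto
      ultimately show ?thesis unfolding c_def by (simp add: numeral_3_eq_3)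
    qed
    have c1: "c 1 t = 0" for t
    proof -
      have "c 2 t + c 1 t = 0" using step1[of 1 t] False by (simp add: numeral_2_eq_2)
      moreover have "c 3 t + c 2 t = 0" using step1[of 2 t] False by (simp add: numeral_3_eq_3 numeral_2_eq_2)
      ultimately show ?thesis using step2[of t] by (simp add: algebra_simps) (metis add_cancel_right_left add_diff_cancel_left' add_eq_0_iff2 diff_add_cancel mult_2 mult_eq_0_iff zero_neq_numeral)
    qed
    have cp: "c p t = 0" if "1 \<le> p" "p \<le> s - 1" for p t
      using that
    proof (induction p)
      case 0 then show ?case by simp
    next
      case (Suc p)
      show ?case
      proof (cases "p = 0")
        case True then show ?thesis using c1 by simp
      next
        case False
        then have "c p t = 0" using Suc by auto
        moreover have "c (p + 1) t + c p t = 0" using step1[of p t] False Suc.prems by auto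
        ultimately show ?thesis by simp
      qed
    qed
    have "D i j t = c i t" unfolding c_def s_def by simp
    then show ?thesis using cp[of i t] less.prems s_def by auto
  qed
qed


lemma TP_bl: "is_TP n m br \<Longrightarrow> bilinear_on n br"
  unfolding is_TP_def by (elim conjE)
lemma TP_alt: "is_TP n m br \<Longrightarrow> \<forall>x\<in>vec_carrier n. br x x = 0"
  unfolding is_TP_def by (elim conjE)
lemma TP_id: "is_TP n m br \<Longrightarrow> \<forall>x\<in>vec_carrier n. \<forall>y\<in>vec_carrier n. \<forall>z\<in>vec_carrier n.
        scal 2 (m z (br x y)) = br (m z x) y + br x (m z y)"
  unfolding is_TP_def by (elim conjE)

lemma TP_basis_ident:
  assumes TP: "is_TP n (mu0 n) br"
    and i: "1 \<le> i" "i \<le> n" and j: "1 \<le> j" "j \<le> n" and k: "1 \<le> k" "k \<le> n"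
  shows "(if k < t \<and> t \<le> n then 2 * br (ee n i) (ee n j) (t - k) else 0)
       = br (ee n (i + k)) (ee n j) t + br (ee n i) (ee n (j + k)) t"
proof -
  have bl: "bilinear_on n br" using TP_bl[OF TP] .
  have "scal 2 (mu0 n (ee n k) (br (ee n i) (ee n j))) =
     br (mu0 n (ee n k) (ee n i)) (ee n j) + br (ee n i) (mu0 n (ee n k) (ee n j))"
    using TP_id[OF TP] ee_carrier by blast
  then have "scal 2 (mu0 n (ee n k) (br (ee n i) (ee n j))) t =
     br (ee n (i + k)) (ee n j) t + br (ee n i) (ee n (j + k)) t"
    using mu0_ee_ee[OF k(1) i(1)] mu0_ee_ee[OF k(1) j(1)] by (simp add: add.commute)
  then show ?thesis by (auto simp: scal_apply mu0_ee_left[OF k(1)] split: if_splits)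
qed

lemma br_out:
  assumes TP: "is_TP n (mu0 n) br"
  shows "n < i \<Longrightarrow> br (ee n i) (ee n j) t = 0" "n < j \<Longrightarrow> br (ee n i) (ee n j) t = 0"
proof -
  have bl: "bilinear_on n br" using TP_bl[OF TP] .
  show "n < i \<Longrightarrow> br (ee n i) (ee n j) t = 0"
    using ee_zero[of n i] bilin_zero_left[OF bl ee_carrier] by simp
  show "n < j \<Longrightarrow> br (ee n i) (ee n j) t = 0"
    using ee_zero[of n j] bilin_zero_right[OF bl ee_carrier] by simp
qed

lemma br_anti:
  assumes TP: "is_TP n (mu0 n) br"
  shows "br (ee n i) (ee n j) t = - br (ee n j) (ee n i) t"
proof -
  have bl: "bilinear_on n br" using TP_bl[OF TP] .
  have alt: "\<forall>x\<in>vec_carrier n. br x x = 0" using TP_alt[OF TP] .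
  have h: "br (ee n i) (ee n j) = - br (ee n j) (ee n i)" by (rule bilin_antisym[OF bl alt ee_carrier ee_carrier])
  show ?thesis by (subst h) simp
qed

lemma br_carrier:
  assumes TP: "is_TP n (mu0 n) br"
  shows "br (ee n i) (ee n j) \<in> vec_carrier n"
  using TP_bl[OF TP] by (auto simp: bilinear_on_def)

lemma TP_is_tp:
  assumes n: "2 \<le> n" and TP: "is_TP n (mu0 n) br"
  defines "a \<equiv> br (ee n 1) (ee n 2)"
  shows "\<forall>x\<in>vec_carrier n. \<forall>y\<in>vec_carrier n. br x y = tp_bracket n a x y"
proof -
  define b where "b i j t = br (ee n i) (ee n j) t" for i j t
  have bl: "bilinear_on n br" using TP_bl[OF TP] .
  have a_car: "a \<in> vec_carrier n" unfolding a_def using br_carrier[OF TP] .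
  have a0: "a 0 = 0" using carrier_0[OF a_car] .
  have agt: "\<And>t. n < t \<Longrightarrow> a t = 0" using carrier_gt[OF a_car] .
  define D where "D i j t = b i j t - Fb n a i j t" for i j t
  have Danti: "D i j t = - D j i t" for i j t
    unfolding D_def b_def using br_anti[OF TP, of i j t] Fb_antisym[of n a i j t] by simp
  have Dbase: "D 1 2 t = 0" for t
  proof -
    have "Fb n a 1 2 t = a t" using a0 agt by (cases "t = 0") (auto simp: Fb_def not_le)
    then show ?thesis unfolding D_def b_def a_def by simp
  qed
  have Did: "D (i + k) j t + D i (j + k) t = (if k < t \<and> t \<le> n then 2 * D i j (t - k) else 0)"
    if "1 \<le> i" "i \<le> n" "1 \<le> j" "j \<le> n" "1 \<le> k" "k \<le> n" for i j k t
    using TP_basis_ident[OF TP that, of t] Fb_ident[of i j k t n a] that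
    unfolding D_def b_def by (auto simp: algebra_simps)
  have ph1: "D i j t = 0" if "1 \<le> i" "1 \<le> j" "i + j \<le> n + 1" for i j t
  proof (rule hom_zero[of D "n + 1"])
    show "D i j t = - D j i t" for i j t by (rule Danti)
    show "D 1 2 t = 0" for t by (rule Dbase)
    show "D (i + k) j t + D i (j + k) t = 0"
      if "1 \<le> i" "1 \<le> j" "1 \<le> k" "k \<le> 2" "i + j + k \<le> n + 1" "\<forall>t. D i j t = 0" for i j k t
      using Did[of i j k t] that by auto
  qed (use that in auto)
  have a1: "a 1 = 0"
  proof -
    have e1: "2 * b 1 2 1 = b n 2 n"
      using TP_basis_ident[OF TP, of 1 2 "n - 1" n] n br_out(2)[OF TP, of "n + 1" 1 n]
      unfolding b_def by auto
    have e2: "2 * b n 1 (n - 1) = b n 2 n"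
      using TP_basis_ident[OF TP, of n 1 1 n] n br_out(1)[OF TP, of "n + 1" 1 n]
      unfolding b_def by (auto simp: numeral_2_eq_2)
    have "b n 1 (n - 1) = Fb n a n 1 (n - 1)" using ph1[of n 1 "n - 1"] n unfolding D_def by auto
    also have "\<dots> = (1 - of_nat n) * a 1"
      using n by (simp add: Fb_def of_nat_diff)
    finally have "2 * a 1 = 2 * ((1 - of_nat n) * a 1)" using e1 e2 unfolding a_def b_def by simp
    then have "of_nat n * a 1 = 0" by (simp add: algebra_simps)
    then show ?thesis using n by simp
  qed
  have Fb_big: "Fb n a p q t = 0" if "n + 2 \<le> p + q" for p q t
  proof -
    have "p + q \<le> t + 2 \<Longrightarrow> t \<le> n \<Longrightarrow> t + 3 - (p + q) = 1" using that by auto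
    then show ?thesis using a1 by (auto simp: Fb_def)
  qed
  have ph2: "D i j t = 0" if "1 \<le> i" "1 \<le> j" "i \<le> n" "j \<le> n" for i j t
  proof (rule hom_zero[of D "2 * n + 2"])
    show "D i j t = - D j i t" for i j t by (rule Danti)
    show "D 1 2 t = 0" for t by (rule Dbase)
    show "D (i + k) j t + D i (j + k) t = 0"
      if "1 \<le> i" "1 \<le> j" "1 \<le> k" "k \<le> 2" "i + j + k \<le> 2 * n + 2" "\<forall>t. D i j t = 0" for i j k t
    proof (cases "i \<le> n \<and> j \<le> n")
      case True
      then show ?thesis using Did[of i j k t] that n by auto
    next
      case False
      then have "n < i \<or> n < j" by auto
      then show ?thesis
        unfolding D_def b_def using br_out[OF TP] Fb_big that by auto
    qed
  qed (use that in auto)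
  have bF: "br (ee n i) (ee n j) t = tp_basis n a i j t" if "1 \<le> i" "i \<le> n" "1 \<le> j" "j \<le> n" for i j t
  proof -
    have "br (ee n i) (ee n j) t = Fb n a i j t" using ph2[of i j t] that unfolding D_def b_def by auto
    also have "\<dots> = tp_basis n a i j t"
    proof (cases "i + j = 2")
      case True then have "i = 1" "j = 1" using that by auto
      then show ?thesis by (simp add: Fb_def tp_basis_def)
    next
      case False
      show ?thesis
      proof (cases "i + j \<le> t + 2 \<and> t \<le> n")
        case True
        show ?thesis
        proof (cases "t + 2 = i + j")
          case True2: True
          then have "t + 3 - (i + j) = 1" by simp
          then show ?thesis using True a1 by (auto simp: Fb_def tp_basis_def)
        next
          case False2: False
          then show ?thesis using True False that by (auto simp: Fb_def tp_basis_def)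
        qed
      next
        case False2: False
        then show ?thesis by (auto simp: Fb_def tp_basis_def)
      qed
    qed
    finally show ?thesis .
  qed
  show ?thesis
  proof (intro ballI ext)
    fix x y t assume x: "x \<in> vec_carrier n" and y: "y \<in> vec_carrier n"
    show "br x y t = tp_bracket n a x y t"
      unfolding bilin_expand[OF bl x y] tp_bracket_def
      by (intro sum.cong refl) (simp add: bF)
  qed
qed


definition phi :: "nat \<Rightarrow> complex fps \<Rightarrow> (nat \<Rightarrow> complex) \<Rightarrow> (nat \<Rightarrow> complex)" where
  "phi n u x = vecof n (Fv x oo u)"

lemma Fv_lin: "Fv (scal c x + y) = fps_const c * Fv x + Fv y"
  by (rule fps_ext) (simp add: scal_apply)

lemma vecof_lin: "vecof n (fps_const c * f + g) = scal c (vecof n f) + vecof n g"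
  by (auto simp: vecof_def scal_apply fun_eq_iff)

lemma phi_linear: "linear_on n (phi n u)"
  unfolding linear_on_def phi_def
  by (simp add: Fv_lin fps_compose_add_distrib fps_const_mult_apply_left[symmetric] vecof_lin)

lemma Fv_compose_0: "x \<in> vec_carrier n \<Longrightarrow> (Fv x oo u) $ 0 = 0"
  by (simp add: carrier_0)

lemma phi_phi:
  assumes x: "x \<in> vec_carrier n" and u0: "u $ 0 = 0" and v0: "v $ 0 = 0"
  shows "phi n v (phi n u x) = vecof n (Fv x oo (u oo v))"
proof -
  have "eqm (Suc n) (Fv (phi n u x)) (Fv x oo u)"
    unfolding phi_def by (rule Fv_vecof) (simp add: carrier_0[OF x])
  then have "eqm (Suc n) (Fv (phi n u x) oo v) ((Fv x oo u) oo v)" by (rule eqm_compose_left)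
  then show ?thesis unfolding phi_def[of n v]
    by (simp add: vecof_eqm fps_compose_assoc[OF v0 u0])
qed

lemma phi_bij:
  assumes u0: "u $ 0 = 0" and u1: "u $ 1 \<noteq> 0"
  shows "bij_betw (phi n u) (vec_carrier n) (vec_carrier n)"
proof (rule bij_betwI[where g = "phi n (fps_inv u)"])
  have v0: "fps_inv u $ 0 = 0" by (simp add: fps_inv_def)
  show "phi n u \<in> vec_carrier n \<rightarrow> vec_carrier n" by (simp add: phi_def)
  show "phi n (fps_inv u) \<in> vec_carrier n \<rightarrow> vec_carrier n" by (simp add: phi_def)
  show "phi n (fps_inv u) (phi n u x) = x" if "x \<in> vec_carrier n" for x
    using phi_phi[OF that u0 v0] fps_inv_right[OF u0 u1] vecof_Fv[OF that] by simp
  show "phi n u (phi n (fps_inv u) y) = y" if "y \<in> vec_carrier n" for y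
    using phi_phi[OF that v0 u0] fps_inv[OF u0 u1] vecof_Fv[OF that] by simp
qed

lemma Fv_phi: "x \<in> vec_carrier n \<Longrightarrow> eqm (Suc n) (Fv (phi n u x)) (Fv x oo u)"
  unfolding phi_def by (rule Fv_vecof) (simp add: carrier_0)

lemma phi_mult:
  assumes x: "x \<in> vec_carrier n" and y: "y \<in> vec_carrier n" and u0: "u $ 0 = 0"
  shows "phi n u (mu0 n x y) = mu0 n (phi n u x) (phi n u y)"
proof -
  have "phi n u (mu0 n x y) = vecof n (Fv (vecof n (Fv x * Fv y)) oo u)"
    by (simp add: phi_def mu0_fps[OF x y])
  also have "\<dots> = vecof n ((Fv x * Fv y) oo u)"
    by (rule vecof_eqm, rule eqm_compose_left, rule Fv_vecof) (simp add: carrier_0[OF x])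
  also have "\<dots> = vecof n ((Fv x oo u) * (Fv y oo u))"
    by (simp add: fps_compose_mult_distrib[OF u0])
  also have "\<dots> = vecof n (Fv (phi n u x) * Fv (phi n u y))"
    by (rule vecof_eqm, rule eqm_sym, rule eqm_mult; rule Fv_phi; fact)
  also have "\<dots> = mu0 n (phi n u x) (phi n u y)"
    by (simp add: mu0_fps phi_def)
  finally show ?thesis .
qed

lemma Pb_01:
  assumes x: "x \<in> vec_carrier n" and y: "y \<in> vec_carrier n"
  shows "Pb (Fv x) (Fv y) $ 0 = 0" "Pb (Fv x) (Fv y) $ 1 = 0"
  using carrier_0[OF x] carrier_0[OF y] by (simp_all add: Pb_def fps_mult_nth_1)

lemma compose_low:
  assumes "P $ 0 = 0" "P $ 1 = 0" "k \<le> 1"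
  shows "(P oo u) $ k = (0::complex)"
proof -
  have "k = 0 \<or> k = 1" using assms by auto
  then show ?thesis using assms by (auto simp: fps_compose_nth)
qed

lemma Pb_eqm:
  assumes "eqm (Suc N) f f'" "eqm (Suc N) g g'" "f $ 0 = 0" "g $ 0 = 0" "f' $ 0 = 0" "g' $ 0 = 0"
  shows "eqm (Suc N) (Pb f g) (Pb f' g')"
proof -
  have dg: "eqm N (fps_deriv g) (fps_deriv g')" "eqm N (fps_deriv f) (fps_deriv f')"
    using assms by (auto intro: eqm_deriv)
  have "eqm (N + 1) (f * fps_deriv g) (f * fps_deriv g')"
    by (rule eqm_mult_low[OF _ dg(1)]) (use assms in auto)
  moreover have "eqm (Suc N) (f * fps_deriv g') (f' * fps_deriv g')"
    by (rule eqm_mult_right) (fact assms)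
  moreover have "eqm (N + 1) (g * fps_deriv f) (g * fps_deriv f')"
    by (rule eqm_mult_low[OF _ dg(2)]) (use assms in auto)
  moreover have "eqm (Suc N) (g * fps_deriv f') (g' * fps_deriv f')"
    by (rule eqm_mult_right) (fact assms)
  ultimately show ?thesis unfolding Pb_def
    by (metis Suc_eq_plus1 eqm_diff eqm_trans mult.commute)
qed

lemma Pb_compose:
  assumes u0: "u $ 0 = 0"
  shows "Pb (f oo u) (g oo u) = fps_deriv u * (Pb f g oo u)"
  unfolding Pb_def fps_compose_deriv[OF u0] fps_compose_sub_distrib fps_compose_mult_distrib[OF u0]
  by (simp add: algebra_simps)

lemma phi_bracket:
  assumes n: "1 \<le> n" and x: "x \<in> vec_carrier n" and y: "y \<in> vec_carrier n" and u0: "u $ 0 = 0"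
    and E: "eqm (n - 1) (Vf a oo u) (Vf b * fps_deriv u)"
  shows "phi n u (tp_bracket n a x y) = tp_bracket n b (phi n u x) (phi n u y)"
proof -
  define Q where "Q = Pb (Fv x) (Fv y) oo u"
  have Q01: "\<And>k. k < 2 \<Longrightarrow> Q $ k = 0" unfolding Q_def using compose_low[OF Pb_01[OF x y]] by auto
  have "phi n u (tp_bracket n a x y) = vecof n (Fv (vecof n (Vf a * Pb (Fv x) (Fv y))) oo u)"
    by (simp add: phi_def tpb_fps[OF x y])
  also have "\<dots> = vecof n ((Vf a * Pb (Fv x) (Fv y)) oo u)"
    by (rule vecof_eqm, rule eqm_compose_left, rule Fv_vecof) (simp add: Pb_01[OF x y])
  also have "\<dots> = vecof n (Q * (Vf a oo u))"
    by (simp add: fps_compose_mult_distrib[OF u0] Q_def mult.commute)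
  also have "\<dots> = vecof n (Q * (Vf b * fps_deriv u))"
  proof (rule vecof_eqm)
    have "eqm (n - 1 + 2) (Q * (Vf a oo u)) (Q * (Vf b * fps_deriv u))"
      by (rule eqm_mult_low[OF Q01 E])
    then show "eqm (Suc n) (Q * (Vf a oo u)) (Q * (Vf b * fps_deriv u))" using n by simp
  qed
  also have "\<dots> = vecof n (Vf b * Pb (Fv x oo u) (Fv y oo u))"
    by (simp add: Pb_compose[OF u0] Q_def algebra_simps)
  also have "\<dots> = vecof n (Vf b * Pb (Fv (phi n u x)) (Fv (phi n u y)))"
  proof (rule vecof_eqm, rule eqm_mult_left, rule eqm_sym, rule Pb_eqm)
    show "eqm (Suc n) (Fv (phi n u x)) (Fv x oo u)" by (rule Fv_phi[OF x])
    show "eqm (Suc n) (Fv (phi n u y)) (Fv y oo u)" by (rule Fv_phi[OF y])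
  qed (simp_all add: phi_def vecof_def carrier_0[OF x] carrier_0[OF y])
  also have "\<dots> = tp_bracket n b (phi n u x) (phi n u y)"
    by (simp add: tpb_fps phi_def)
  finally show ?thesis .
qed

lemma crit:
  assumes n: "1 \<le> n" and u0: "u $ 0 = 0" and u1: "u $ 1 \<noteq> 0"
    and E: "eqm (n - 1) (Vf a oo u) (Vf b * fps_deriv u)"
  shows "TP_iso n (mu0 n) (tp_bracket n a) (mu0 n) (tp_bracket n b)"
  unfolding TP_iso_def
  using phi_linear phi_bij[OF u0 u1] phi_mult[OF _ _ u0] phi_bracket[OF n _ _ u0 E] by blast


lemma Fv_ee: "1 \<le> k \<Longrightarrow> k \<le> n \<Longrightarrow> Fv (ee n k) = fps_X ^ k"
  by (rule fps_ext) (auto simp: ee_def fps_X_power_nth)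

lemma vecof_sum: "vecof n (\<Sum>i\<in>S. fps_const (c i) * g i) = (\<Sum>i\<in>S. scal (c i) (vecof n (g i)))"
  by (rule ext) (auto simp: vecof_def sum_fun scal_apply fps_sum_nth)

lemma iso_phi_ee:
  assumes lin: "linear_on n \<phi>"
    and hom: "\<forall>x\<in>vec_carrier n. \<forall>y\<in>vec_carrier n. \<phi> (mu0 n x y) = mu0 n (\<phi> x) (\<phi> y)"
  defines "u \<equiv> Fv (\<phi> (ee n 1))"
  shows "1 \<le> k \<Longrightarrow> k \<le> n \<Longrightarrow> \<phi> (ee n k) = vecof n (u ^ k)"
proof (induction k rule: dec_induct)
  have c: "\<phi> (ee n 1) \<in> vec_carrier n" using lin_carrier[OF lin ee_carrier] .
  have u0: "u $ 0 = 0" unfolding u_def using carrier_0[OF c] by simp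
  {
    case base
    show ?case unfolding u_def using vecof_Fv[OF c] by simp
  next
    case (step k)
    have "\<phi> (ee n (Suc k)) = \<phi> (mu0 n (ee n 1) (ee n k))"
      using mu0_ee_ee[of 1 k n] step by simp
    also have "\<dots> = mu0 n (\<phi> (ee n 1)) (\<phi> (ee n k))" using hom by simp
    also have "\<dots> = vecof n (u * Fv (vecof n (u ^ k)))"
      using step c by (simp add: mu0_fps u_def)
    also have "\<dots> = vecof n (u * u ^ k)"
      by (rule vecof_eqm, rule eqm_mult_left, rule Fv_vecof)
         (use u0 step in \<open>simp add: zero_power\<close>)
    finally show ?case by simp
  }
qed


lemma vecof_0: "vecof n f 0 = 0" by (simp add: vecof_def)

lemma X_pow_compose: "u $ 0 = 0 \<Longrightarrow> fps_X ^ i oo u = (u::complex fps) ^ i"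
  using fps_compose_power[of u fps_X i] by simp

lemma iso_phi:
  assumes lin: "linear_on n \<phi>"
    and hom: "\<forall>x\<in>vec_carrier n. \<forall>y\<in>vec_carrier n. \<phi> (mu0 n x y) = mu0 n (\<phi> x) (\<phi> y)"
    and x: "x \<in> vec_carrier n"
  shows "\<phi> x = vecof n (Fv x oo Fv (\<phi> (ee n 1)))"
proof -
  define u where "u = Fv (\<phi> (ee n 1))"
  have c: "\<phi> (ee n 1) \<in> vec_carrier n" using lin_carrier[OF lin ee_carrier] .
  have u0: "u $ 0 = 0" unfolding u_def using carrier_0[OF c] by simp
  have "\<phi> x = (\<Sum>i=1..n. scal (x i) (\<phi> (ee n i)))" by (rule lin_expand[OF lin x])
  also have "\<dots> = (\<Sum>i=1..n. scal (x i) (vecof n (u ^ i)))"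
  proof (rule sum.cong[OF refl])
    fix i assume "i \<in> {1..n}"
    then have "\<phi> (ee n i) = vecof n (u ^ i)" using iso_phi_ee[OF lin hom, of i] unfolding u_def by simp
    then show "scal (x i) (\<phi> (ee n i)) = scal (x i) (vecof n (u ^ i))" by simp
  qed
  also have "\<dots> = vecof n (\<Sum>i=1..n. fps_const (x i) * u ^ i)" by (simp add: vecof_sum)
  also have "(\<Sum>i=1..n. fps_const (x i) * u ^ i) = Fv x oo u"
    unfolding Fv_expand[OF x] fps_compose_sum_distrib
    by (intro sum.cong refl) (simp add: fps_const_mult_apply_left[symmetric] X_pow_compose[OF u0])
  finally show ?thesis unfolding u_def .
qed

lemma compose_nth_1: "u $ 0 = 0 \<Longrightarrow> (f oo u) $ 1 = f $ 1 * u $ 1"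
  by (simp add: fps_compose_nth)

lemma Xw:
  assumes "u $ 0 = (0::complex)"
  shows "u = fps_X * Abs_fps (\<lambda>i. u $ (i + 1))"
  by (rule fps_ext) (use assms in \<open>auto simp: fps_X_mult_nth\<close>)

lemma conv:
  assumes n: "2 \<le> n" and iso: "TP_iso n (mu0 n) (tp_bracket n a) (mu0 n) (tp_bracket n b)"
  shows "\<exists>u. u $ 0 = 0 \<and> u $ 1 \<noteq> 0 \<and> eqm (n - 1) (Vf a oo u) (Vf b * fps_deriv u)"
proof -
  obtain \<phi> where lin: "linear_on n \<phi>" and bij: "bij_betw \<phi> (vec_carrier n) (vec_carrier n)"
    and hom: "\<forall>x\<in>vec_carrier n. \<forall>y\<in>vec_carrier n. \<phi> (mu0 n x y) = mu0 n (\<phi> x) (\<phi> y)"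
    and hb: "\<forall>x\<in>vec_carrier n. \<forall>y\<in>vec_carrier n. \<phi> (tp_bracket n a x y) = tp_bracket n b (\<phi> x) (\<phi> y)"
    using iso unfolding TP_iso_def by blast
  define u where "u = Fv (\<phi> (ee n 1))"
  have c: "\<phi> (ee n 1) \<in> vec_carrier n" using lin_carrier[OF lin ee_carrier] .
  have u0: "u $ 0 = 0" unfolding u_def using carrier_0[OF c] by simp
  have phx: "\<phi> x = vecof n (Fv x oo u)" if "x \<in> vec_carrier n" for x
    using iso_phi[OF lin hom that] unfolding u_def .
  have u1: "u $ 1 \<noteq> 0"
  proof
    assume u1: "u $ 1 = 0"
    have "ee n 1 \<in> \<phi> ` vec_carrier n" using bij_betw_imp_surj_on[OF bij] by simp
    then obtain y where y: "y \<in> vec_carrier n" "\<phi> y = ee n 1" by (metis imageE)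
    have "\<phi> y 1 = (Fv y oo u) $ 1" using phx[OF y(1)] n by (simp add: vecof_def)
    also have "\<dots> = 0" using compose_nth_1[OF u0, of "Fv y"] u1 by simp
    finally have "\<phi> y 1 = 0" .
    moreover have "ee n 1 1 = 1" using n by (simp add: ee_def)
    ultimately show False using y by simp
  qed
  have e1: "Fv (ee n 1) = fps_X" using Fv_ee[of 1 n] n by simp
  have e2: "Fv (ee n 2) = fps_X ^ 2" using Fv_ee[of 2 n] n by simp
  have pe1: "\<phi> (ee n 1) = vecof n u" using phx[OF ee_carrier] e1 u0 by simp
  have pe2: "\<phi> (ee n 2) = vecof n (u ^ 2)" using phx[OF ee_carrier] e2 u0 by (simp add: X_pow_compose)
  have PX: "Pb fps_X (fps_X ^ 2) = fps_X ^ 2" using Pb_X[of 1 2] by (simp add: power2_eq_square)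
  have Pu: "Pb u (u ^ 2) = fps_deriv u * u ^ 2"
  proof -
    have d: "fps_deriv (u ^ 2) = 2 * u * fps_deriv u" by (simp add: power2_eq_square mult_2 algebra_simps)
    show ?thesis unfolding Pb_def d by (simp add: power2_eq_square mult_2 algebra_simps)
  qed
  have L: "\<phi> (tp_bracket n a (ee n 1) (ee n 2)) = vecof n ((Vf a oo u) * u ^ 2)"
  proof -
    have "\<phi> (tp_bracket n a (ee n 1) (ee n 2)) = vecof n (Fv (vecof n (Vf a * fps_X ^ 2)) oo u)"
      using phx[of "tp_bracket n a (ee n 1) (ee n 2)"] unfolding tpb_fps[OF ee_carrier ee_carrier] e1 e2 PX by simp
    also have "\<dots> = vecof n ((Vf a * fps_X ^ 2) oo u)"
      by (rule vecof_eqm, rule eqm_compose_left, rule Fv_vecof) simp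
    finally show ?thesis by (simp add: fps_compose_mult_distrib[OF u0] X_pow_compose[OF u0])
  qed
  have R: "tp_bracket n b (\<phi> (ee n 1)) (\<phi> (ee n 2)) = vecof n (Vf b * (fps_deriv u * u ^ 2))"
  proof -
    have "tp_bracket n b (\<phi> (ee n 1)) (\<phi> (ee n 2)) = vecof n (Vf b * Pb (Fv (vecof n u)) (Fv (vecof n (u ^ 2))))"
      unfolding pe1 pe2 by (rule tpb_fps) simp_all
    also have "\<dots> = vecof n (Vf b * Pb u (u ^ 2))"
      by (rule vecof_eqm, rule eqm_mult_left, rule Pb_eqm)
         (use u0 in \<open>simp_all add: Fv_vecof vecof_0 power2_eq_square\<close>)
    finally show ?thesis by (simp add: Pu)
  qed
  have "vecof n ((Vf a oo u) * u ^ 2) = vecof n (Vf b * (fps_deriv u * u ^ 2))"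
  proof -
    have "\<phi> (tp_bracket n a (ee n 1) (ee n 2)) = tp_bracket n b (\<phi> (ee n 1)) (\<phi> (ee n 2))"
      using hb ee_carrier by blast
    then show ?thesis using L R by simp
  qed
  then have E: "eqm (Suc n) ((Vf a oo u) * u ^ 2) (Vf b * fps_deriv u * u ^ 2)"
    unfolding eqm_def vecof_def fun_eq_iff
  proof (intro allI impI)
    fix i assume h: "\<forall>k. (if 1 \<le> k \<and> k \<le> n then ((Vf a oo u) * u ^ 2) $ k else 0) =
       (if 1 \<le> k \<and> k \<le> n then (Vf b * (fps_deriv u * u ^ 2)) $ k else 0)" and i: "i < Suc n"
    show "((Vf a oo u) * u ^ 2) $ i = (Vf b * fps_deriv u * u ^ 2) $ i"
    proof (cases "i = 0")
      case True then show ?thesis using u0 by simp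
    next
      case False then show ?thesis using h[rule_format, of i] i by (simp add: mult.assoc)
    qed
  qed
  define w where "w = Abs_fps (\<lambda>i. u $ (i + 1))"
  have uw: "u = fps_X * w" unfolding w_def by (rule Xw[OF u0])
  have w0: "w $ 0 \<noteq> 0" using u1 by (simp add: w_def)
  have "eqm (n - 1 + 2) (fps_X ^ 2 * (w ^ 2 * (Vf a oo u))) (fps_X ^ 2 * (w ^ 2 * (Vf b * fps_deriv u)))"
  proof -
    have u2: "u ^ 2 = fps_X ^ 2 * w ^ 2" unfolding uw by (simp add: power_mult_distrib)
    have m1: "(Vf a oo u) * u ^ 2 = fps_X ^ 2 * (w ^ 2 * (Vf a oo u))" unfolding u2 by (simp add: mult_ac)
    have m2: "Vf b * fps_deriv u * u ^ 2 = fps_X ^ 2 * (w ^ 2 * (Vf b * fps_deriv u))" unfolding u2 by (simp add: mult_ac)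
    have nn: "n - 1 + 2 = Suc n" using n by simp
    show ?thesis using E unfolding m1 m2 nn .
  qed
  then have "eqm (n - 1) (w ^ 2 * (Vf a oo u)) (w ^ 2 * (Vf b * fps_deriv u))" by (rule eqm_cancel_Xpow)
  then have "eqm (n - 1) (Vf a oo u) (Vf b * fps_deriv u)" by (rule eqm_cancel_unit) (simp add: w0)
  then show ?thesis using u0 u1 by blast
qed


definition Rl :: "nat \<Rightarrow> complex fps \<Rightarrow> complex fps \<Rightarrow> bool" where
  "Rl N V W \<longleftrightarrow> (\<exists>u. u $ 0 = 0 \<and> u $ 1 \<noteq> 0 \<and> eqm N (V oo u) (W * fps_deriv u))"

lemma Rl_refl: "Rl N V V"
  unfolding Rl_def by (rule exI[of _ fps_X]) simp

lemma Rl_trans: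
  assumes "Rl N V W" "Rl N W Z"
  shows "Rl N V Z"
proof -
  obtain u where u0: "u $ 0 = 0" and u1: "u $ 1 \<noteq> 0" and eu: "eqm N (V oo u) (W * fps_deriv u)"
    using assms(1) unfolding Rl_def by blast
  obtain v where v0: "v $ 0 = 0" and v1: "v $ 1 \<noteq> 0" and ev: "eqm N (W oo v) (Z * fps_deriv v)"
    using assms(2) unfolding Rl_def by blast
  have "V oo (u oo v) = (V oo u) oo v" by (rule fps_compose_assoc[OF v0 u0])
  moreover have "eqm N ((V oo u) oo v) ((W * fps_deriv u) oo v)" by (rule eqm_compose_left[OF eu])
  moreover have "(W * fps_deriv u) oo v = (W oo v) * (fps_deriv u oo v)" by (rule fps_compose_mult_distrib[OF v0])
  moreover have "eqm N ((W oo v) * (fps_deriv u oo v)) (Z * fps_deriv v * (fps_deriv u oo v))"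
    by (rule eqm_mult_right[OF ev])
  moreover have "Z * fps_deriv v * (fps_deriv u oo v) = Z * fps_deriv (u oo v)"
    by (simp add: fps_compose_deriv[OF v0] mult_ac)
  ultimately have "eqm N (V oo (u oo v)) (Z * fps_deriv (u oo v))" by (metis eqm_trans)
  moreover have "(u oo v) $ 0 = 0" using u0 by simp
  moreover have "(u oo v) $ 1 \<noteq> 0" using compose_nth_1[OF v0, of u] u1 v1 by simp
  ultimately show ?thesis unfolding Rl_def by blast
qed

lemma Rl_eqm_right: "Rl N V W \<Longrightarrow> eqm N W W' \<Longrightarrow> Rl N V W'"
  unfolding Rl_def by (meson eqm_mult_right eqm_trans)

lemma Rl_scale:
  assumes l: "l \<noteq> 0"
  shows "Rl N V (Abs_fps (\<lambda>i. l ^ i * V $ i / l))"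
  unfolding Rl_def
proof (intro exI conjI)
  show "(fps_const l * fps_X) $ 0 = 0" by simp
  show "(fps_const l * fps_X) $ 1 \<noteq> 0" using l by simp
  have "V oo (fps_const l * fps_X) = Abs_fps (\<lambda>i. l ^ i * V $ i / l) * fps_deriv (fps_const l * fps_X)"
    using l by (simp add: fps_compose_linear fps_eq_iff)
  then show "eqm N (V oo (fps_const l * fps_X)) (Abs_fps (\<lambda>i. l ^ i * V $ i / l) * fps_deriv (fps_const l * fps_X))"
    by simp
qed

lemma binom_low:
  assumes d: "1 \<le> d" and p: "p \<le> d"
  shows "((1 + fps_const c * fps_X ^ d) ^ l) $ p = (if p = 0 then 1 else if p = d then of_nat l * c else (0::complex))"
  using p
proof (induction l arbitrary: p)
  case 0 then show ?case using d by auto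
next
  case (Suc l)
  have "((1 + fps_const c * fps_X ^ d) ^ Suc l) $ p
      = ((1 + fps_const c * fps_X ^ d) ^ l) $ p + c * (fps_X ^ d * (1 + fps_const c * fps_X ^ d) ^ l) $ p"
    by (simp add: algebra_simps)
  also have "\<dots> = (if p = 0 then 1 else if p = d then of_nat (Suc l) * c else 0)"
    unfolding fps_X_power_mult_nth using Suc.IH[of p] Suc.IH[of 0] Suc.prems d by (auto simp: algebra_simps)
  finally show ?case .
qed

lemma upow_coeff:
  fixes c :: complex
  assumes k: "2 \<le> k" and il: "l \<le> i" and ik: "i \<le> l + (k - 1)"
  shows "((fps_X + fps_const c * fps_X ^ k) ^ l) $ i = (if i = l then 1 else if i = l + (k - 1) then of_nat l * c else 0)"
proof -
  have "fps_X + fps_const c * fps_X ^ k = fps_X * (1 + fps_const c * (fps_X :: complex fps) ^ (k - 1))"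
    using k by (simp add: algebra_simps power_Suc[symmetric])
  then have "(fps_X + fps_const c * fps_X ^ k) ^ l = fps_X ^ l * (1 + fps_const c * (fps_X :: complex fps) ^ (k - 1)) ^ l"
    by (simp add: power_mult_distrib)
  then have "((fps_X + fps_const c * fps_X ^ k) ^ l) $ i = ((1 + fps_const c * (fps_X :: complex fps) ^ (k - 1)) ^ l) $ (i - l)"
    using il by (simp add: fps_X_power_mult_nth)
  also have "\<dots> = (if i - l = 0 then 1 else if i - l = k - 1 then of_nat l * c else 0)"
    by (rule binom_low) (use k ik in auto)
  finally show ?thesis using il ik k by auto
qed


lemma step_lemma:
  fixes V :: "complex fps"
  assumes mj: "m < j" and low: "\<And>l. l < m \<Longrightarrow> V $ l = 0" and a: "V $ m \<noteq> 0" and km: "j - m + 1 \<noteq> m"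
  shows "\<exists>W. Rl N V W \<and> (\<forall>i<j. W $ i = V $ i) \<and> W $ j = 0"
proof -
  define k where "k = j - m + 1"
  have k2: "2 \<le> k" and jk: "j = m + (k - 1)" using mj unfolding k_def by auto
  have mk: "m \<noteq> k" using km unfolding k_def by auto
  have kmc: "(of_nat m - of_nat k :: complex) \<noteq> 0" using mk by simp
  define c where "c = - V $ j / (V $ m * (of_nat m - of_nat k))"
  define u where "u = fps_X + fps_const c * (fps_X :: complex fps) ^ k"
  have u0: "u $ 0 = 0" using k2 unfolding u_def by simp
  have u1: "u $ 1 = 1" using k2 unfolding u_def by simp
  have du: "fps_deriv u = 1 + fps_const (c * of_nat k) * fps_X ^ (k - 1)"
    unfolding u_def by (simp add: fps_deriv_power algebra_simps)
  have du0: "fps_deriv u $ 0 \<noteq> 0" unfolding du using k2 by simp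
  define W where "W = (V oo u) * inverse (fps_deriv u)"
  have Wdu: "W * fps_deriv u = V oo u"
    unfolding W_def using du0 by (simp add: mult.assoc inverse_mult_eq_1)
  have R: "Rl N V W" unfolding Rl_def using u0 u1 Wdu by (intro exI[of _ u]) simp
  have tm: "V $ l * (u ^ l) $ i = (if l = i then V $ i else 0) + (if l = m \<and> i = j then V $ m * of_nat m * c else 0)"
    if li: "l \<le> i" and ij: "i \<le> j" for l i
  proof (cases "l < m")
    case True then show ?thesis using low[of l] mj by auto
  next
    case False
    have "(u ^ l) $ i = (if i = l then 1 else if i = l + (k - 1) then of_nat l * c else 0)"
      unfolding u_def by (rule upow_coeff[OF k2 li]) (use False ij jk in auto)
    moreover have "i = l + (k - 1) \<longleftrightarrow> l = m \<and> i = j" using False ij jk li by auto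
    ultimately show ?thesis using mj by auto
  qed
  have VU: "(V oo u) $ i = V $ i + (if i = j then V $ m * of_nat m * c else 0)" if ij: "i \<le> j" for i
  proof -
    have "(V oo u) $ i = (\<Sum>l=0..i. (if l = i then V $ i else 0) + (if l = m \<and> i = j then V $ m * of_nat m * c else 0))"
      unfolding fps_compose_nth using tm ij by (intro sum.cong) auto
    also have "\<dots> = V $ i + (if i = j then V $ m * of_nat m * c else 0)"
      using mj by (simp add: sum.distrib)
    finally show ?thesis .
  qed
  have Wc: "(W * fps_deriv u) $ i = W $ i + (if k - 1 \<le> i then c * of_nat k * W $ (i - (k - 1)) else 0)" for i
  proof -
    have "W * fps_deriv u = W + fps_const (c * of_nat k) * (W * fps_X ^ (k - 1))"
      unfolding du by (simp add: distrib_left mult.left_commute)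
    then show ?thesis by (simp add: fps_X_power_mult_right_nth)
  qed
  have Wrec: "W $ i = (V oo u) $ i - (if k - 1 \<le> i then c * of_nat k * W $ (i - (k - 1)) else 0)" for i
    using Wc[of i] unfolding Wdu by simp
  have Wlow: "W $ i = V $ i" if "i < j" for i
    using that
  proof (induction i rule: less_induct)
    case (less i)
    show ?case
    proof (cases "k - 1 \<le> i")
      case True
      have "i - (k - 1) < m" "i - (k - 1) < i" using True less.prems jk k2 by auto
      then have "W $ (i - (k - 1)) = 0" using less.IH[of "i - (k - 1)"] low less.prems by auto
      then show ?thesis using Wrec[of i] VU[of i] less.prems by auto
    next
      case False then show ?thesis using Wrec[of i] VU[of i] less.prems by auto
    qed
  qed
  have "W $ j = V $ j + V $ m * of_nat m * c - c * of_nat k * W $ m"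
    using Wrec[of j] VU[of j] jk by simp
  also have "W $ m = V $ m" using Wlow mj by simp
  finally have "W $ j = V $ j + V $ m * c * (of_nat m - of_nat k)" by (simp add: algebra_simps)
  also have "\<dots> = 0" unfolding c_def using a kmc by (simp add: field_simps)
  finally show ?thesis using R Wlow by blast
qed


lemma iter:
  fixes V :: "complex fps"
  assumes low: "\<And>l. l < m \<Longrightarrow> V $ l = 0" and a: "V $ m \<noteq> 0"
  shows "m < j \<Longrightarrow> \<exists>W. Rl N V W \<and> W $ m = V $ m \<and> (\<forall>i<j. i \<noteq> m \<longrightarrow> i \<noteq> 2 * m - 1 \<longrightarrow> W $ i = 0)"
proof (induction j)
  case 0 then show ?case by simp
next
  case (Suc j)
  show ?case
  proof (cases "j = m")
    case True
    show ?thesis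
      by (rule exI[of _ V]) (use True low in \<open>auto simp: Rl_refl\<close>)
  next
    case False
    then have mj: "m < j" using Suc.prems by simp
    obtain W where R: "Rl N V W" and Wm: "W $ m = V $ m"
      and Wz: "\<forall>i<j. i \<noteq> m \<longrightarrow> i \<noteq> 2 * m - 1 \<longrightarrow> W $ i = 0"
      using Suc.IH[OF mj] by blast
    show ?thesis
    proof (cases "j = 2 * m - 1")
      case True
      show ?thesis
        by (rule exI[of _ W]) (use R Wm Wz True in \<open>auto simp: less_Suc_eq\<close>)
    next
      case False
      have lowW: "W $ l = 0" if "l < m" for l using Wz that mj by auto
      have km: "j - m + 1 \<noteq> m" using False mj by auto
      obtain W' where R': "Rl N W W'" and W'l: "\<forall>i<j. W' $ i = W $ i" and W'j: "W' $ j = 0"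
        using step_lemma[OF mj lowW _ km, of N] Wm a by auto
      show ?thesis
      proof (rule exI[of _ W'], intro conjI allI impI)
        show "Rl N V W'" by (rule Rl_trans[OF R R'])
        show "W' $ m = V $ m" using W'l Wm mj by simp
        fix i assume "i < Suc j" "i \<noteq> m" "i \<noteq> 2 * m - 1"
        then show "W' $ i = 0" using W'l W'j Wz by (cases "i = j") auto
      qed
    qed
  qed
qed

lemma complex_root:
  assumes d: "1 \<le> d" and c: "(c::complex) \<noteq> 0"
  shows "\<exists>z. z ^ d = c"
proof -
  define c' where "c' = root d (norm c) * cis (Arg c / d)"
  have "bij_betw (\<lambda>z. c' * z) {z. z ^ d = 1} {z. z ^ d = c}"
    unfolding c'_def by (rule bij_betw_nth_root_unity) (use c d in auto)
  then have "(\<lambda>z. c' * z) ` {z. z ^ d = 1} = {z. z ^ d = c}" by (rule bij_betw_imp_surj_on)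
  moreover have "(1::complex) \<in> {z. z ^ d = 1}" by simp
  ultimately have "c' * 1 \<in> {z. z ^ d = c}" by blast
  then show ?thesis by auto
qed


definition p1 :: "nat \<Rightarrow> complex" where "p1 = (\<lambda>k. if k = 2 then 1 else 0)"
definition p2 :: "complex \<Rightarrow> nat \<Rightarrow> complex" where "p2 a = (\<lambda>k. if k = 3 then a else 0)"
definition p3 :: "nat \<Rightarrow> nat \<Rightarrow> complex \<Rightarrow> nat \<Rightarrow> complex" where
  "p3 n s a = (\<lambda>k. if k = s then 1 else if k = 2 * s - 3 \<and> 2 * s - 3 \<le> n then a else 0)"

lemma TP_params_eq: "TP_params n = {p1} \<union> range p2 \<union> {p3 n s a | s a. 4 \<le> s \<and> s \<le> n}"
  unfolding TP_params_def p1_def p2_def p3_def by auto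

lemma p1_in: "p1 \<in> TP_params n" by (simp add: TP_params_eq)
lemma p2_in: "p2 a \<in> TP_params n" by (simp add: TP_params_eq)
lemma p3_in: "4 \<le> s \<Longrightarrow> s \<le> n \<Longrightarrow> p3 n s a \<in> TP_params n" by (auto simp: TP_params_eq)

lemma normal_form:
  fixes V :: "complex fps"
  assumes n: "5 \<le> n"
  shows "\<exists>\<beta>\<in>TP_params n. Rl (n - 1) V (Vf \<beta>)"
proof (cases "\<forall>i<n - 1. V $ i = 0")
  case True
  have "eqm (n - 1) V (Vf (p2 0))" using True by (simp add: eqm_def p2_def)
  then have "Rl (n - 1) V (Vf (p2 0))" by (rule Rl_eqm_right[OF Rl_refl])
  then show ?thesis using p2_in by blast
next
  case False
  define N where "N = n - 1"
  define m where "m = (LEAST i. i < N \<and> V $ i \<noteq> 0)"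
  have ex: "\<exists>i. i < N \<and> V $ i \<noteq> 0" using False N_def by auto
  have mN: "m < N" and a: "V $ m \<noteq> 0" using LeastI_ex[OF ex] unfolding m_def by auto
  have low: "V $ l = 0" if "l < m" for l
    using not_less_Least[of l "\<lambda>i. i < N \<and> V $ i \<noteq> 0"] that mN unfolding m_def by auto
  obtain W where R: "Rl N V W" and Wm: "W $ m = V $ m"
    and Wz: "\<forall>i<N. i \<noteq> m \<longrightarrow> i \<noteq> 2 * m - 1 \<longrightarrow> W $ i = 0"
    using iter[OF low a mN] by blast
  define a where "a = V $ m"
  have a0: "a \<noteq> 0" using a unfolding a_def .
  consider "m = 0" | "m = 1" | "2 \<le> m" by linarith
  then show ?thesis
  proof cases
    case 1
    have R2: "Rl N W (Abs_fps (\<lambda>i. a ^ i * W $ i / a))" by (rule Rl_scale[OF a0])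
    have "eqm N (Abs_fps (\<lambda>i. a ^ i * W $ i / a)) (Vf p1)"
      unfolding eqm_def using Wz Wm a0 1 by (auto simp: p1_def a_def)
    then have "Rl N V (Vf p1)" using Rl_trans[OF R R2] Rl_eqm_right by blast
    then show ?thesis using p1_in N_def by blast
  next
    case 2
    have "eqm N W (Vf (p2 a))"
      unfolding eqm_def using Wz Wm 2 by (auto simp: p2_def a_def)
    then have "Rl N V (Vf (p2 a))" using R Rl_eqm_right by blast
    then show ?thesis using p2_in N_def by blast
  next
    case 3
    have m1: "1 \<le> m - 1" using 3 by simp
    then obtain l where l: "l ^ (m - 1) = 1 / a" using complex_root[of "m - 1" "1 / a"] a0 by auto
    have l0: "l \<noteq> 0"
    proof
      assume "l = 0"
      then have z: "l ^ (m - 1) = 0" using m1 by simp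
      have "1 / a = 0" using l z by metis
      then show False using a0 by simp
    qed
    have R2: "Rl N W (Abs_fps (\<lambda>i. l ^ i * W $ i / l))" by (rule Rl_scale[OF l0])
    define c' where "c' = l ^ (2 * m - 1) * W $ (2 * m - 1) / l"
    have lm: "l ^ m * a / l = 1"
    proof -
      have mm: "m = Suc (m - 1)" using 3 by simp
      have "l ^ m = l ^ Suc (m - 1)" using mm by (rule arg_cong)
      also have "\<dots> = l ^ (m - 1) * l" by (rule power_Suc2)
      finally have "l ^ m = l ^ (m - 1) * l" .
      then show ?thesis using l l0 a0 by simp
    qed
    have "eqm N (Abs_fps (\<lambda>i. l ^ i * W $ i / l)) (Vf (p3 n (m + 2) c'))"
      unfolding eqm_def
    proof (intro allI impI)
      fix i assume i: "i < N"
      show "Abs_fps (\<lambda>i. l ^ i * W $ i / l) $ i = Vf (p3 n (m + 2) c') $ i"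
      proof (cases "i = m")
        case True then show ?thesis using lm Wm by (simp add: p3_def a_def)
      next
        case False
        show ?thesis
        proof (cases "i = 2 * m - 1")
          case True
          then have "2 * (m + 2) - 3 \<le> n" "i + 2 = 2 * (m + 2) - 3" "i + 2 \<noteq> m + 2" using i N_def 3 by auto
          then show ?thesis using True by (simp add: p3_def c'_def)
        next
          case False2: False
          then have "i + 2 \<noteq> 2 * (m + 2) - 3" "i + 2 \<noteq> m + 2" using False 3 by auto
          then show ?thesis using Wz i False False2 by (simp add: p3_def)
        qed
      qed
    qed
    then have "Rl N V (Vf (p3 n (m + 2) c'))" using Rl_trans[OF R R2] Rl_eqm_right by blast
    moreover have "p3 n (m + 2) c' \<in> TP_params n" by (rule p3_in) (use 3 mN N_def in auto)
    ultimately show ?thesis using N_def by blast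
  qed
qed


lemma pow_diag:
  assumes u0: "u $ 0 = (0::complex)"
  shows "(u ^ i) $ i = (u $ 1) ^ i"
proof -
  define w where "w = Abs_fps (\<lambda>i. u $ (i + 1))"
  have "u = fps_X * w" unfolding w_def by (rule Xw[OF u0])
  then have "u ^ i = fps_X ^ i * w ^ i" by (simp add: power_mult_distrib)
  then have "(u ^ i) $ i = (w ^ i) $ 0" by (simp add: fps_X_power_mult_nth)
  then show ?thesis by (simp add: fps_power_zeroth w_def)
qed

lemma pow_low:
  assumes u0: "u $ 0 = (0::complex)" and "i < l"
  shows "(u ^ l) $ i = 0"
proof -
  define w where "w = Abs_fps (\<lambda>i. u $ (i + 1))"
  have "u = fps_X * w" unfolding w_def by (rule Xw[OF u0])
  then have "u ^ l = fps_X ^ l * w ^ l" by (simp add: power_mult_distrib)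
  then show ?thesis using assms(2) by (simp add: fps_X_power_mult_nth)
qed

lemma compose_lead:
  assumes u0: "u $ 0 = (0::complex)" and low: "\<forall>l<i. V $ l = 0"
  shows "(V oo u) $ i = V $ i * (u $ 1) ^ i"
proof -
  have "(V oo u) $ i = (\<Sum>l=0..i. if l = i then V $ i * (u $ 1) ^ i else 0)"
    unfolding fps_compose_nth by (intro sum.cong) (auto simp: low pow_diag[OF u0])
  then show ?thesis by simp
qed

lemma mult_lead:
  assumes low: "\<forall>l<i. W $ l = 0"
  shows "(W * f) $ i = W $ i * (f $ 0 :: complex)"
proof -
  have "(W * f) $ i = (\<Sum>p=0..i. if p = i then W $ i * f $ 0 else 0)"
    unfolding fps_mult_nth by (intro sum.cong) (auto simp: low)
  then show ?thesis by simp
qed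

lemma Zequiv:
  assumes u0: "u $ 0 = (0::complex)" and u1: "u $ 1 \<noteq> 0"
    and E: "eqm N (V oo u) (W * fps_deriv u)"
  shows "i \<le> N \<Longrightarrow> (\<forall>l<i. V $ l = 0) \<longleftrightarrow> (\<forall>l<i. W $ l = 0)"
proof (induction i)
  case 0 then show ?case by simp
next
  case (Suc i)
  then have IH: "(\<forall>l<i. V $ l = 0) \<longleftrightarrow> (\<forall>l<i. W $ l = 0)" and iN: "i < N" by auto
  have eq: "(V oo u) $ i = (W * fps_deriv u) $ i" using E iN by (simp add: eqm_def)
  show ?case
  proof (cases "\<forall>l<i. V $ l = 0")
    case True
    then have Wl: "\<forall>l<i. W $ l = 0" using IH by simp
    have "V $ i * (u $ 1) ^ i = W $ i * u $ 1"
      using eq compose_lead[OF u0 True] mult_lead[OF Wl, of "fps_deriv u"] by simp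
    then have "V $ i = 0 \<longleftrightarrow> W $ i = 0" using u1 by auto
    then show ?thesis using True Wl by (auto simp: less_Suc_eq)
  next
    case False
    then show ?thesis using IH by (auto simp: less_Suc_eq)
  qed
qed

lemma lead_rel:
  assumes u0: "u $ 0 = (0::complex)" and u1: "u $ 1 \<noteq> 0"
    and E: "eqm N (V oo u) (W * fps_deriv u)" and iN: "i < N" and low: "\<forall>l<i. V $ l = 0"
  shows "V $ i * (u $ 1) ^ i = W $ i * u $ 1"
proof -
  have Wl: "\<forall>l<i. W $ l = 0" using Zequiv[OF u0 u1 E, of i] iN low by simp
  have eq: "(V oo u) $ i = (W * fps_deriv u) $ i" using E iN by (simp add: eqm_def)
  then show ?thesis using compose_lead[OF u0 low] mult_lead[OF Wl, of "fps_deriv u"] by simp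
qed

lemma onepg_pow:
  fixes g :: "complex fps"
  assumes g: "\<forall>q<p. g $ q = 0" and p: "1 \<le> p" and i: "i < 2 * p"
  shows "((1 + g) ^ m) $ i = (if i = 0 then 1 else of_nat m * g $ i)"
  using i
proof (induction m arbitrary: i)
  case 0 then show ?case by simp
next
  case (Suc m)
  have g0: "g $ 0 = 0" using g p by auto
  have "(g * (1 + g) ^ m) $ i = (\<Sum>q=0..i. if q = i then g $ i else 0)"
    unfolding fps_mult_nth
  proof (intro sum.cong refl)
    fix q assume q: "q \<in> {0..i}"
    show "g $ q * ((1 + g) ^ m) $ (i - q) = (if q = i then g $ i else 0)"
    proof (cases "q < p")
      case True then show ?thesis using g by auto
    next
      case False
      then have "i - q < 2 * p" "i - q < p" using Suc.prems q by auto
      then have "((1 + g) ^ m) $ (i - q) = (if i - q = 0 then 1 else 0)"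
        using Suc.IH[of "i - q"] g by auto
      then show ?thesis using q by auto
    qed
  qed
  then have gm: "(g * (1 + g) ^ m) $ i = g $ i" by simp
  have "((1 + g) ^ Suc m) $ i = ((1 + g) ^ m) $ i + (g * (1 + g) ^ m) $ i"
    by (simp add: algebra_simps)
  then show ?case using Suc.IH[OF Suc.prems] gm g0 by (auto simp: algebra_simps)
qed


lemma poly2_eqm:
  assumes m2: "2 \<le> m" and V: "\<forall>i<2 * m. V $ i = (if i = m then 1 else if i = 2 * m - 1 then a else 0)"
  shows "eqm (2 * m) V (fps_X ^ m + fps_const a * fps_X ^ (2 * m - 1))"
  unfolding eqm_def using V m2 by (auto simp: fps_X_power_nth)

lemma residue:
  fixes V W u :: "complex fps"
  assumes m2: "2 \<le> m" and N: "2 * m \<le> N" and u0: "u $ 0 = 0" and u1: "u $ 1 \<noteq> 0"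
    and E: "eqm N (V oo u) (W * fps_deriv u)"
    and V: "\<forall>i<2 * m. V $ i = (if i = m then 1 else if i = 2 * m - 1 then a else 0)"
    and W: "\<forall>i<2 * m. W $ i = (if i = m then 1 else if i = 2 * m - 1 then b else 0)"
  shows "a = b"
proof -
  define l where "l = u $ 1"
  have l0: "l \<noteq> 0" using u1 l_def by simp
  have lowV: "\<forall>j<m. V $ j = 0" using V m2 by auto
  have "V $ m * l ^ m = W $ m * l" using lead_rel[OF u0 u1 E _ lowV] N m2 unfolding l_def by simp
  then have lm: "l ^ m = l" using V W m2 by simp
  have lm1: "l ^ (m - 1) = 1"
  proof -
    have "l ^ (m - 1) * l = 1 * l" using lm m2 by (metis Suc_diff_1 less_le_trans pos2 power_Suc2 mult_1)
    then show ?thesis using l0 by simp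
  qed
  have E2: "eqm (2 * m) (V oo u) (W * fps_deriv u)" using eqm_mono[OF E N] .
  have E3: "eqm (2 * m) ((fps_X ^ m + fps_const a * fps_X ^ (2 * m - 1)) oo u)
       ((fps_X ^ m + fps_const b * fps_X ^ (2 * m - 1)) * fps_deriv u)"
    by (meson E2 eqm_compose_left eqm_mult_right eqm_sym eqm_trans poly2_eqm[OF m2 V] poly2_eqm[OF m2 W])
  define w where "w = Abs_fps (\<lambda>i. u $ (i + 1))"
  have uw: "u = fps_X * w" unfolding w_def by (rule Xw[OF u0])
  have w0: "w $ 0 = l" unfolding w_def l_def by simp
  have L: "(fps_X ^ m + fps_const a * fps_X ^ (2 * m - 1)) oo u
      = fps_X ^ m * (w ^ m + fps_const a * (fps_X ^ (m - 1) * w ^ (2 * m - 1)))"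
  proof -
    have "(fps_X ^ m + fps_const a * fps_X ^ (2 * m - 1)) oo u = u ^ m + fps_const a * u ^ (2 * m - 1)"
      by (simp add: fps_compose_add_distrib fps_const_mult_apply_left[symmetric] X_pow_compose[OF u0])
    also have "\<dots> = fps_X ^ m * w ^ m + fps_const a * (fps_X ^ (m + (m - 1)) * w ^ (2 * m - 1))"
      unfolding uw power_mult_distrib using m2 by (simp add: mult_2)
    also have "\<dots> = fps_X ^ m * (w ^ m + fps_const a * (fps_X ^ (m - 1) * w ^ (2 * m - 1)))"
      by (simp add: power_add algebra_simps)
    finally show ?thesis .
  qed
  have R: "(fps_X ^ m + fps_const b * fps_X ^ (2 * m - 1)) * fps_deriv u
      = fps_X ^ m * ((1 + fps_const b * fps_X ^ (m - 1)) * fps_deriv u)"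
  proof -
    have "fps_X ^ (2 * m - 1) = fps_X ^ m * (fps_X :: complex fps) ^ (m - 1)"
      using m2 by (simp add: power_add[symmetric] mult_2)
    then show ?thesis by (simp add: algebra_simps)
  qed
  have E4: "eqm m (w ^ m + fps_const a * (fps_X ^ (m - 1) * w ^ (2 * m - 1)))
      ((1 + fps_const b * fps_X ^ (m - 1)) * fps_deriv u)"
  proof (rule eqm_cancel_Xpow[where d = m])
    have "eqm (2 * m) (fps_X ^ m * (w ^ m + fps_const a * (fps_X ^ (m - 1) * w ^ (2 * m - 1))))
      (fps_X ^ m * ((1 + fps_const b * fps_X ^ (m - 1)) * fps_deriv u))" using E3 unfolding L R .
    then show "eqm (m + m) (fps_X ^ m * (w ^ m + fps_const a * (fps_X ^ (m - 1) * w ^ (2 * m - 1))))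
      (fps_X ^ m * ((1 + fps_const b * fps_X ^ (m - 1)) * fps_deriv u))" by (simp only: mult_2[symmetric])
  qed
  have coef: "(w ^ m) $ i + a * (if i = m - 1 then l ^ (2 * m - 1) else 0)
      = of_nat (i + 1) * w $ i + b * (if i = m - 1 then l else 0)" if i: "i < m" for i
  proof -
    have e: "(w ^ m + fps_const a * (fps_X ^ (m - 1) * w ^ (2 * m - 1))) $ i
        = ((1 + fps_const b * fps_X ^ (m - 1)) * fps_deriv u) $ i"
      using E4 i by (simp add: eqm_def)
    have x1: "(fps_X ^ (m - 1) * w ^ (2 * m - 1)) $ i = (if i = m - 1 then l ^ (2 * m - 1) else 0)"
      using i by (auto simp: fps_X_power_mult_nth fps_power_zeroth w0)
    have f1: "(w ^ m + fps_const a * (fps_X ^ (m - 1) * w ^ (2 * m - 1))) $ i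
        = (w ^ m) $ i + a * (fps_X ^ (m - 1) * w ^ (2 * m - 1)) $ i" by simp
    have f2: "((1 + fps_const b * fps_X ^ (m - 1)) * fps_deriv u) $ i
        = fps_deriv u $ i + b * (fps_X ^ (m - 1) * fps_deriv u) $ i"
      by (simp add: algebra_simps)
    have x2: "(fps_X ^ (m - 1) * fps_deriv u) $ i = (if i = m - 1 then l else 0)"
      using i by (auto simp: fps_X_power_mult_nth l_def)
    have x3: "fps_deriv u $ i = of_nat (i + 1) * w $ i" by (simp add: w_def)
    show ?thesis using e unfolding f1 f2 x1 x2 x3 .
  qed
  define g where "g = Abs_fps (\<lambda>i. if i = 0 then 0 else w $ i / l)"
  have wg: "w = fps_const l * (1 + g)"
    by (rule fps_ext) (use l0 w0 in \<open>auto simp: g_def\<close>)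
  have wm: "(w ^ m) $ i = l * ((1 + g) ^ m) $ i" for i
    unfolding wg power_mult_distrib fps_const_power by (simp add: lm)
  have wi: "w $ i = l * g $ i" if "0 < i" for i using that l0 by (simp add: g_def)
  have g0: "g $ 0 = 0" by (simp add: g_def)
  have G: "g $ q = 0" if "q < m - 1" for q
    using that
  proof (induction q rule: less_induct)
    case (less q)
    show ?case
    proof (cases "q = 0")
      case True then show ?thesis using g0 by simp
    next
      case False
      have gl: "\<forall>r<q. g $ r = 0" using less by auto
      have "((1 + g) ^ m) $ q = of_nat m * g $ q" using onepg_pow[OF gl, of q m] False by simp
      then have "l * (of_nat m * g $ q) = of_nat (q + 1) * (l * g $ q)"
        using coef[of q] less.prems wm[of q] wi[of q] False by simp
      then have "l * (of_nat m * g $ q) = l * (of_nat (q + 1) * g $ q)" by (simp only: mult.left_commute)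
      then have "of_nat m * g $ q = of_nat (q + 1) * g $ q" using l0 by simp
      then have "(of_nat m - of_nat (q + 1)) * g $ q = 0" by (simp add: left_diff_distrib)
      moreover have "m \<noteq> q + 1" using less.prems by simp
      then have "(of_nat m - of_nat (q + 1) :: complex) \<noteq> 0" by (simp only: right_minus_eq of_nat_eq_iff) simp
      ultimately show ?thesis by simp
    qed
  qed
  have "((1 + g) ^ m) $ (m - 1) = of_nat m * g $ (m - 1)"
    using onepg_pow[of "m - 1" g "m - 1" m] G m2 by simp
  then have "l * (of_nat m * g $ (m - 1)) + a * l ^ (2 * m - 1) = of_nat m * (l * g $ (m - 1)) + b * l"
    using coef[of "m - 1"] wm[of "m - 1"] wi[of "m - 1"] m2 by simp
  then have "a * l ^ (2 * m - 1) = b * l" by (simp add: algebra_simps)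
  moreover have "l ^ (2 * m - 1) = l"
  proof -
    have "l ^ (2 * m - 1) = l ^ (m - 1) * l ^ m" using m2 by (simp add: power_add[symmetric] mult_2)
    then show ?thesis using lm1 lm by simp
  qed
  ultimately show ?thesis using l0 by simp
qed


lemma Vf_p1: "Vf p1 $ i = (if i = 0 then 1 else 0)" by (simp add: p1_def)
lemma Vf_p2: "Vf (p2 a) $ i = (if i = 1 then a else 0)" by (simp add: p2_def)
lemma Vf_p3: "Vf (p3 n s a) $ i = (if i + 2 = s then 1 else if i + 2 = 2 * s - 3 \<and> 2 * s - 3 \<le> n then a else 0)"
  by (simp add: p3_def)

definition Zr :: "complex fps \<Rightarrow> nat \<Rightarrow> bool" where "Zr V i \<longleftrightarrow> (\<forall>l<i. V $ l = 0)"

lemma Z_p1: "\<not> Zr (Vf p1) 1"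
  unfolding Zr_def by (auto simp: Vf_p1 simp del: Vf_nth)
lemma Z_p2a: "Zr (Vf (p2 a)) 1"
  unfolding Zr_def by (auto simp: Vf_p2 simp del: Vf_nth)
lemma Z_p2b: "a \<noteq> 0 \<Longrightarrow> \<not> Zr (Vf (p2 a)) 2"
  unfolding Zr_def by (auto simp: Vf_p2 simp del: Vf_nth intro!: exI[of _ 1])
lemma Z_p2c: "Zr (Vf (p2 0)) i"
  unfolding Zr_def by (auto simp: Vf_p2 simp del: Vf_nth)
lemma Z_p3a: "4 \<le> s \<Longrightarrow> i \<le> s - 2 \<Longrightarrow> Zr (Vf (p3 n s a)) i"
  unfolding Zr_def by (auto simp: Vf_p3 simp del: Vf_nth)
lemma Z_p3b: "4 \<le> s \<Longrightarrow> \<not> Zr (Vf (p3 n s a)) (s - 1)"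
  unfolding Zr_def by (auto simp: Vf_p3 simp del: Vf_nth intro!: exI[of _ "s - 2"])

lemma distinct_core:
  assumes n: "5 \<le> n" and al: "\<alpha> \<in> TP_params n" and be: "\<beta> \<in> TP_params n"
    and u0: "u $ 0 = 0" and u1: "u $ 1 \<noteq> 0" and E: "eqm (n - 1) (Vf \<alpha> oo u) (Vf \<beta> * fps_deriv u)"
  shows "\<alpha> = \<beta>"
proof -
  define N where "N = n - 1"
  have EN: "eqm N (Vf \<alpha> oo u) (Vf \<beta> * fps_deriv u)" using E N_def by simp
  have Z: "\<And>i. i \<le> N \<Longrightarrow> Zr (Vf \<alpha>) i \<longleftrightarrow> Zr (Vf \<beta>) i"
    unfolding Zr_def by (rule Zequiv[OF u0 u1 EN])
  have N4: "4 \<le> N" using n N_def by simp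
  have al': "\<alpha> = p1 \<or> (\<exists>a. \<alpha> = p2 a) \<or> (\<exists>s a. \<alpha> = p3 n s a \<and> 4 \<le> s \<and> s \<le> n)"
    using al unfolding TP_params_eq by auto
  have be': "\<beta> = p1 \<or> (\<exists>a. \<beta> = p2 a) \<or> (\<exists>s a. \<beta> = p3 n s a \<and> 4 \<le> s \<and> s \<le> n)"
    using be unfolding TP_params_eq by auto
  have c12: False if "\<alpha> = p1" "\<beta> = p2 b" for b
    using Z[of 1] N4 Z_p1 Z_p2a[of b] that by auto
  have c21: False if "\<alpha> = p2 b" "\<beta> = p1" for b
    using Z[of 1] N4 Z_p1 Z_p2a[of b] that by auto
  have c13: False if "\<alpha> = p1" "\<beta> = p3 n s b" "4 \<le> s" for s b
  proof -
    have "Zr (Vf (p3 n s b)) 1" by (rule Z_p3a) (use that in auto)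
    then show False using Z[of 1] N4 Z_p1 that by auto
  qed
  have c31: False if "\<alpha> = p3 n s b" "\<beta> = p1" "4 \<le> s" for s b
  proof -
    have "Zr (Vf (p3 n s b)) 1" by (rule Z_p3a) (use that in auto)
    then show False using Z[of 1] N4 Z_p1 that by auto
  qed
  have c23: False if "\<alpha> = p2 a" "\<beta> = p3 n s b" "4 \<le> s" "s \<le> n" for a s b
  proof (cases "a = 0")
    case True
    then show False using Z[of "s - 1"] N_def Z_p2c[of "s - 1"] Z_p3b[of s n b] that by auto
  next
    case False
    then show False using Z[of 2] N4 Z_p2b[of a] Z_p3a[of s 2 n b] that by auto
  qed
  have c32: False if "\<alpha> = p3 n s b" "\<beta> = p2 a" "4 \<le> s" "s \<le> n" for a s b
  proof (cases "a = 0")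
    case True
    then show False using Z[of "s - 1"] N_def Z_p2c[of "s - 1"] Z_p3b[of s n b] that by auto
  next
    case False
    then show False using Z[of 2] N4 Z_p2b[of a] Z_p3a[of s 2 n b] that by auto
  qed
  have c22: "a = b" if "\<alpha> = p2 a" "\<beta> = p2 b" for a b
  proof -
    have "Vf \<alpha> $ 1 * (u $ 1) ^ 1 = Vf \<beta> $ 1 * u $ 1"
      by (rule lead_rel[OF u0 u1 EN]) (use N4 that in \<open>auto simp: Vf_p2 simp del: Vf_nth\<close>)
    then show ?thesis using that u1 by (simp add: Vf_p2 del: Vf_nth)
  qed
  have c33: "p3 n s a = p3 n s' b" if "\<alpha> = p3 n s a" "\<beta> = p3 n s' b" "4 \<le> s" "s \<le> n" "4 \<le> s'" "s' \<le> n" for s s' a b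
  proof -
    have ss: "s = s'"
    proof (rule ccontr)
      assume "s \<noteq> s'"
      then consider "s < s'" | "s' < s" by linarith
      then show False
      proof cases
        case 1
        have "Zr (Vf (p3 n s' b)) (s - 1)" by (rule Z_p3a) (use that 1 in auto)
        moreover have "\<not> Zr (Vf (p3 n s a)) (s - 1)" by (rule Z_p3b) (use that in auto)
        moreover have "s - 1 \<le> N" using that N_def by auto
        ultimately show False using Z[of "s - 1"] that by auto
      next
        case 2
        have "Zr (Vf (p3 n s a)) (s' - 1)" by (rule Z_p3a) (use that 2 in auto)
        moreover have "\<not> Zr (Vf (p3 n s' b)) (s' - 1)" by (rule Z_p3b) (use that in auto)
        moreover have "s' - 1 \<le> N" using that N_def by auto
        ultimately show False using Z[of "s' - 1"] that by auto
      qed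
    qed
    show ?thesis
    proof (cases "2 * s - 3 \<le> n")
      case True
      define m where "m = s - 2"
      have m2: "2 \<le> m" and mN: "2 * m \<le> N" using that True N_def unfolding m_def by auto
      have hs: "i + 2 = s \<longleftrightarrow> i = m" "i + 2 = 2 * s - 3 \<longleftrightarrow> i = 2 * m - 1" for i
        using that unfolding m_def by auto
      have "a = b"
      proof (rule residue[OF m2 mN u0 u1 EN])
        show "\<forall>i<2 * m. Vf \<alpha> $ i = (if i = m then 1 else if i = 2 * m - 1 then a else 0)"
        proof (intro allI impI)
          fix i
          have "Vf \<alpha> $ i = (if i + 2 = s then 1 else if i + 2 = 2 * s - 3 \<and> 2 * s - 3 \<le> n then a else 0)"
            unfolding that(1) by (rule Vf_p3)
          then show "Vf \<alpha> $ i = (if i = m then 1 else if i = 2 * m - 1 then a else 0)"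
            unfolding hs[of i] using True by simp
        qed
        show "\<forall>i<2 * m. Vf \<beta> $ i = (if i = m then 1 else if i = 2 * m - 1 then b else 0)"
        proof (intro allI impI)
          fix i
          have "Vf \<beta> $ i = (if i + 2 = s then 1 else if i + 2 = 2 * s - 3 \<and> 2 * s - 3 \<le> n then b else 0)"
            unfolding that(2) ss by (rule Vf_p3)
          then show "Vf \<beta> $ i = (if i = m then 1 else if i = 2 * m - 1 then b else 0)"
            unfolding hs[of i] using True by simp
        qed
      qed
      then show ?thesis using ss by simp
    next
      case False
      then show ?thesis using ss by (simp add: p3_def fun_eq_iff)
    qed
  qed
  show ?thesis
    using al' be' c12 c21 c13 c31 c23 c32 c22 c33 by metis
qed


theorem mainTheorem2:
  fixes n :: nat
    and br :: "(nat \<Rightarrow> complex) \<Rightarrow> (nat \<Rightarrow> complex) \<Rightarrow> (nat \<Rightarrow> complex)"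
  assumes "n \<ge> 5"
    and "is_TP n (mu0 n) br"
  shows "(\<exists>\<alpha>\<in>TP_params n. TP_iso n (mu0 n) br (mu0 n) (tp_bracket n \<alpha>))
       \<and> (\<forall>\<alpha>\<in>TP_params n. \<forall>\<beta>\<in>TP_params n. \<alpha> \<noteq> \<beta> \<longrightarrow>
            \<not> TP_iso n (mu0 n) (tp_bracket n \<alpha>) (mu0 n) (tp_bracket n \<beta>))"
proof
  have n5: "5 \<le> n" using assms(1) .
  define a where "a = br (ee n 1) (ee n 2)"
  have eq: "\<forall>x\<in>vec_carrier n. \<forall>y\<in>vec_carrier n. br x y = tp_bracket n a x y"
    unfolding a_def by (rule TP_is_tp) (use assms in auto)
  obtain \<beta> where be: "\<beta> \<in> TP_params n" and R: "Rl (n - 1) (Vf a) (Vf \<beta>)"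
    using normal_form[OF n5] by blast
  obtain u where u0: "u $ 0 = 0" and u1: "u $ 1 \<noteq> 0" and E: "eqm (n - 1) (Vf a oo u) (Vf \<beta> * fps_deriv u)"
    using R unfolding Rl_def by blast
  have "TP_iso n (mu0 n) (tp_bracket n a) (mu0 n) (tp_bracket n \<beta>)"
    by (rule crit[OF _ u0 u1 E]) (use n5 in simp)
  then have "TP_iso n (mu0 n) br (mu0 n) (tp_bracket n \<beta>)"
    unfolding TP_iso_def using eq by auto
  then show "\<exists>\<alpha>\<in>TP_params n. TP_iso n (mu0 n) br (mu0 n) (tp_bracket n \<alpha>)" using be by blast
next
  have n5: "5 \<le> n" using assms(1) .
  show "\<forall>\<alpha>\<in>TP_params n. \<forall>\<beta>\<in>TP_params n. \<alpha> \<noteq> \<beta> \<longrightarrow>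
            \<not> TP_iso n (mu0 n) (tp_bracket n \<alpha>) (mu0 n) (tp_bracket n \<beta>)"
  proof (intro ballI impI notI)
    fix \<alpha> \<beta> assume al: "\<alpha> \<in> TP_params n" and be: "\<beta> \<in> TP_params n" and ne: "\<alpha> \<noteq> \<beta>"
      and iso: "TP_iso n (mu0 n) (tp_bracket n \<alpha>) (mu0 n) (tp_bracket n \<beta>)"
    obtain u where u0: "u $ 0 = 0" and u1: "u $ 1 \<noteq> 0" and E: "eqm (n - 1) (Vf \<alpha> oo u) (Vf \<beta> * fps_deriv u)"
      using conv[OF _ iso] n5 by auto
    have "\<alpha> = \<beta>" by (rule distinct_core[OF n5 al be u0 u1 E])
    then show False using ne by simp
  qed
qed


end
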